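(* Let $n\ge 1$ and let $\beta=\prod_{r=1}^k\sigma_{i_r}^{\varepsilon_r}$ be an $n$-string braid, given as a word in the Artin generators $\sigma_1,\dots,\sigma_{n-1}$ with $\varepsilon_r=\pm1$, whose closure $\hat\beta$ is a single closed curve (a knot). Let $B(t)=\prod_{r=1}^k B_{i_r}^{\varepsilon_r}\in GL(n,\mathbf Z[t^{\pm1}])$ be its (unreduced) Burau matrix, where $B_i$ is the $n\times n$ matrix which agrees with the identity except in rows and columns $i,i+1$, where it has the block $\begin{pmatrix}1-t&t\\1&0\end{pmatrix}$. Substitute $t=e^h$ and expand $\det(I-xB(e^h))$ as a power series in $h$ whose coefficients are polynomials in $x$: $$\det(I-xB(e^h))=a_0(x)+a_1(x)h+O(h^2),$$ and write $a_1(x)=f_1x+f_2x^2+\cdots+f_nx^n$ with $f_1,\dots,f_n\in\mathbf Z$. Then Fiedler's polynomial $F_\beta$ of $\beta$ satisfies $$F_\beta(x^{1/2})=(f_1x+\cdots+f_{n-1}x^{n-1})\,x^{-n/2}.$$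
   Context: Conventions: the braid word is read from top to bottom and the strings are oriented downwards; the $r$th letter $\sigma_{i_r}^{\varepsilon_r}$ is a crossing between the strings in positions $i_r$ and $i_r+1$, positive if $\varepsilon_r=+1$ and negative if $\varepsilon_r=-1$. The closed braid $\hat\beta$ is regarded as a curve winding around the braid axis. For the $r$th crossing, the "ascending string" is the string starting from the end of the overcrossing strand, namely string $i_r$ if $\varepsilon_r=+1$ and string $i_r+1$ if $\varepsilon_r=-1$. Define the positive integer $m(r)$ by smoothing the $r$th crossing (in the orientation-respecting way) and following the ascending string around the closed braid until it closes up; $m(r)$ is the number of turns it makes around the braid axis before closing. Fiedler's polynomial is the Laurent polynomial $F_\beta(X)=\sum_{r=1}^k\varepsilon_r X^{2m(r)-n}$, so that $F_\beta(x^{1/2})=\sum_{r=1}^k\varepsilon_r x^{m(r)-n/2}$. *)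

theory Defs
  imports Complex_Main "Jordan_Normal_Form.Determinant"
begin

text \<open>A braid letter is a pair (i, e) standing for sigma_i^e, with positions 1-based,
  1 <= i <= n-1 and e = 1 or e = -1.  A braid word is a list of letters, read left to
  right = top to bottom.\<close>

type_synonym letter = "nat \<times> int"

definition braid_word :: "nat \<Rightarrow> letter list \<Rightarrow> bool" where
  "braid_word n w \<longleftrightarrow> (\<forall>(i, e) \<in> set w. 1 \<le> i \<and> i < n \<and> (e = 1 \<or> e = -1))"

definition swap_pos :: "nat \<Rightarrow> nat \<Rightarrow> nat" where
  "swap_pos i p = (if p = i then i + 1 else if p = i + 1 then i else p)"

definition follow :: "letter list \<Rightarrow> nat \<Rightarrow> nat" where
  "follow ws p = foldl (\<lambda>q l. swap_pos (fst l) q) p ws"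

definition is_knot_closure :: "nat \<Rightarrow> letter list \<Rightarrow> bool" where
  "is_knot_closure n w \<longleftrightarrow> (\<forall>p\<in>{1..n}. \<forall>q\<in>{1..n}. \<exists>m. (follow w ^^ m) p = q)"

text \<open>One full turn around the braid axis after smoothing the r-th crossing (0-based r):
  starting just below crossing r at position p, go through the crossings after r,
  around the closure, through the crossings before r and through the smoothed crossing r
  (which does not change positions).\<close>
definition smoothed_turn :: "letter list \<Rightarrow> nat \<Rightarrow> nat \<Rightarrow> nat" where
  "smoothed_turn w r p = follow (take r w) (follow (drop (Suc r) w) p)"

definition ascending_pos :: "letter list \<Rightarrow> nat \<Rightarrow> nat" where
  "ascending_pos w r = (if snd (w ! r) = 1 then fst (w ! r) else fst (w ! r) + 1)"

definition m_turns :: "letter list \<Rightarrow> nat \<Rightarrow> nat" where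
  "m_turns w r = (LEAST m. 0 < m \<and>
      (smoothed_turn w r ^^ m) (ascending_pos w r) = ascending_pos w r)"

definition fiedler :: "nat \<Rightarrow> letter list \<Rightarrow> real \<Rightarrow> real" where
  "fiedler n w X = (\<Sum>r<length w. of_int (snd (w ! r)) * X powi (2 * int (m_turns w r) - int n))"

text \<open>Burau generator B_i (matrix indices are 0-based, so positions i, i+1 are
  indices i-1, i) and its inverse.\<close>
definition burau_gen :: "nat \<Rightarrow> nat \<Rightarrow> real \<Rightarrow> real mat" where
  "burau_gen n i t = mat n n (\<lambda>(a, b).
     if a = i - 1 \<and> b = i - 1 then 1 - t
     else if a = i - 1 \<and> b = i then t
     else if a = i \<and> b = i - 1 then 1
     else if a = i \<and> b = i then 0
     else if a = b then 1 else 0)"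

definition burau_gen_inv :: "nat \<Rightarrow> nat \<Rightarrow> real \<Rightarrow> real mat" where
  "burau_gen_inv n i t = mat n n (\<lambda>(a, b).
     if a = i - 1 \<and> b = i - 1 then 0
     else if a = i - 1 \<and> b = i then 1
     else if a = i \<and> b = i - 1 then 1 / t
     else if a = i \<and> b = i then 1 - 1 / t
     else if a = b then 1 else 0)"

definition burau_letter :: "nat \<Rightarrow> letter \<Rightarrow> real \<Rightarrow> real mat" where
  "burau_letter n l t = (if snd l = 1 then burau_gen n (fst l) t else burau_gen_inv n (fst l) t)"

definition burau :: "nat \<Rightarrow> letter list \<Rightarrow> real \<Rightarrow> real mat" where
  "burau n w t = foldl (\<lambda>M l. M * burau_letter n l t) (1\<^sub>m n) w"

end

theory Submission
  imports Defs "HOL-Combinatorics.Cycles"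
begin


datatype dn = DN (re: real) (du: "nat \<Rightarrow> real")

instantiation dn :: comm_ring_1
begin
definition "0 = DN 0 (\<lambda>_. 0)"
definition "1 = DN 1 (\<lambda>_. 0)"
definition "x + y = DN (re x + re y) (\<lambda>i. du x i + du y i)"
definition "x - y = DN (re x - re y) (\<lambda>i. du x i - du y i)"
definition "- x = DN (- re x) (\<lambda>i. - du x i)"
definition "x * y = DN (re x * re y) (\<lambda>i. re x * du y i + re y * du x i)"
instance
  by standard (auto simp: zero_dn_def one_dn_def plus_dn_def minus_dn_def uminus_dn_def
      times_dn_def algebra_simps dn.expand fun_eq_iff)
end

lemma re_0[simp]: "re 0 = 0" and du_0[simp]: "du 0 i = 0"
  and re_1[simp]: "re 1 = 1" and du_1[simp]: "du 1 i = 0"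
  and re_add[simp]: "re (x + y) = re x + re y" and du_add[simp]: "du (x + y) i = du x i + du y i"
  and re_diff[simp]: "re (x - y) = re x - re y" and du_diff[simp]: "du (x - y) i = du x i - du y i"
  and re_uminus[simp]: "re (- x) = - re x" and du_uminus[simp]: "du (- x) i = - du x i"
  and re_mult[simp]: "re (x * y) = re x * re y"
  and du_mult[simp]: "du (x * y) i = re x * du y i + re y * du x i"
  by (simp_all add: zero_dn_def one_dn_def plus_dn_def minus_dn_def uminus_dn_def times_dn_def)

lemma re_sum[simp]: "re (sum f A) = (\<Sum>a\<in>A. re (f a))"
  by (induction A rule: infinite_finite_induct) auto
lemma du_sum[simp]: "du (sum f A) i = (\<Sum>a\<in>A. du (f a) i)"
  by (induction A rule: infinite_finite_induct) auto
lemma re_prod[simp]: "re (prod f A) = (\<Prod>a\<in>A. re (f a))"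
  by (induction A rule: infinite_finite_induct) auto
lemma re_of_nat[simp]: "re (of_nat k) = of_nat k"
  by (induction k) auto
lemma du_of_nat[simp]: "du (of_nat k) i = 0"
  by (induction k) auto
lemma re_of_int[simp]: "re (of_int k) = of_int k"
  by (cases k) auto
lemma du_of_int[simp]: "du (of_int k) i = 0"
  by (cases k) auto

definition cst :: "real \<Rightarrow> dn" where "cst a = DN a (\<lambda>_. 0)"
lemma re_cst[simp]: "re (cst a) = a" and du_cst[simp]: "du (cst a) i = 0"
  by (simp_all add: cst_def)

definition sig :: "nat \<Rightarrow> dn \<Rightarrow> dn" where "sig k d = DN (re d) (\<lambda>_. \<Sum>r<k. du d r)"
definition prj :: "nat \<Rightarrow> dn \<Rightarrow> dn" where "prj r d = DN (re d) (\<lambda>_. du d r)"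

lemma sig_hom: "comm_ring_hom (sig k)"
  by unfold_locales (auto simp: sig_def zero_dn_def one_dn_def plus_dn_def times_dn_def
      sum.distrib sum_distrib_left dn.expand fun_eq_iff)
lemma prj_hom: "comm_ring_hom (prj r)"
  by unfold_locales (auto simp: prj_def zero_dn_def one_dn_def plus_dn_def times_dn_def
      dn.expand fun_eq_iff)

definition rel :: "(real \<Rightarrow> real) \<Rightarrow> dn \<Rightarrow> bool" where
  "rel f d \<longleftrightarrow> f 0 = re d \<and> (f has_real_derivative du d 0) (at 0)"

lemma rel_const: "rel (\<lambda>_. c) (cst c)"
  by (simp add: rel_def)
lemma rel_add: "rel f d \<Longrightarrow> rel g e \<Longrightarrow> rel (\<lambda>h. f h + g h) (d + e)"
  unfolding rel_def by (auto intro!: derivative_eq_intros)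
lemma rel_diff: "rel f d \<Longrightarrow> rel g e \<Longrightarrow> rel (\<lambda>h. f h - g h) (d - e)"
  unfolding rel_def by (auto intro!: derivative_eq_intros)
lemma rel_mult: "rel f d \<Longrightarrow> rel g e \<Longrightarrow> rel (\<lambda>h. f h * g h) (d * e)"
  unfolding rel_def by (auto intro!: derivative_eq_intros simp: algebra_simps)
lemma rel_sum: "finite A \<Longrightarrow> (\<And>a. a \<in> A \<Longrightarrow> rel (f a) (d a)) \<Longrightarrow>
   rel (\<lambda>h. \<Sum>a\<in>A. f a h) (\<Sum>a\<in>A. d a)"
proof (induction A rule: finite_induct)
  case empty then show ?case using rel_const[of 0] by (simp add: cst_def zero_dn_def)
next
  case (insert x F) then show ?case by (simp add: rel_add)
qed
lemma rel_prod: "finite A \<Longrightarrow> (\<And>a. a \<in> A \<Longrightarrow> rel (f a) (d a)) \<Longrightarrow>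
   rel (\<lambda>h. \<Prod>a\<in>A. f a h) (\<Prod>a\<in>A. d a)"
proof (induction A rule: finite_induct)
  case empty then show ?case using rel_const[of 1] by (simp add: cst_def one_dn_def)
next
  case (insert x F) then show ?case by (simp add: rel_mult)
qed
lemma rel_of_int: "rel (\<lambda>_. of_int k) (of_int k)"
  unfolding rel_def by simp


definition gen :: "nat \<Rightarrow> nat \<Rightarrow> 'a::comm_ring_1 \<Rightarrow> 'a \<Rightarrow> 'a mat" where
  "gen n i t ti = mat n n (\<lambda>(a, b).
     if a = i - 1 \<and> b = i - 1 then 1 - t
     else if a = i - 1 \<and> b = i then t
     else if a = i \<and> b = i - 1 then 1
     else if a = i \<and> b = i then 0
     else if a = b then 1 else 0)"

definition geni :: "nat \<Rightarrow> nat \<Rightarrow> 'a::comm_ring_1 \<Rightarrow> 'a \<Rightarrow> 'a mat" where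
  "geni n i t ti = mat n n (\<lambda>(a, b).
     if a = i - 1 \<and> b = i - 1 then 0
     else if a = i - 1 \<and> b = i then 1
     else if a = i \<and> b = i - 1 then ti
     else if a = i \<and> b = i then 1 - ti
     else if a = b then 1 else 0)"

definition glet :: "nat \<Rightarrow> letter \<Rightarrow> 'a::comm_ring_1 \<Rightarrow> 'a \<Rightarrow> 'a mat" where
  "glet n l t ti = (if snd l = 1 then gen n (fst l) t ti else geni n (fst l) t ti)"

lemma glet_carrier[simp]: "glet n l t ti \<in> carrier_mat n n"
  by (simp add: glet_def gen_def geni_def)

lemma burau_letter_glet: "burau_letter n l t = glet n l t (1 / t)"
  by (simp add: burau_letter_def glet_def burau_gen_def gen_def burau_gen_inv_def geni_def)

definition prodm :: "nat \<Rightarrow> 'a::comm_ring_1 mat list \<Rightarrow> 'a mat" where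
  "prodm n Ms = foldr (\<lambda>M A. M * A) Ms (1\<^sub>m n)"

lemma prodm_Nil[simp]: "prodm n [] = 1\<^sub>m n" and prodm_Cons[simp]: "prodm n (M # Ms) = M * prodm n Ms"
  by (simp_all add: prodm_def)

lemma prodm_carrier: "(\<And>M. M \<in> set Ms \<Longrightarrow> M \<in> carrier_mat n n) \<Longrightarrow> prodm n Ms \<in> carrier_mat n n"
  by (induction Ms) (auto intro!: mult_carrier_mat)

lemma prodm_append: "(\<And>M. M \<in> set Ms \<Longrightarrow> M \<in> carrier_mat n n) \<Longrightarrow> (\<And>M. M \<in> set Ns \<Longrightarrow> M \<in> carrier_mat n n) \<Longrightarrow>
  prodm n (Ms @ Ns) = prodm n Ms * prodm n Ns"
proof (induction Ms)
  case Nil then show ?case using prodm_carrier[of Ns n] by simp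
next
  case (Cons M Ms)
  then show ?case using prodm_carrier[of Ms n] prodm_carrier[of Ns n]
    by (simp add: assoc_mult_mat[of M n n _ n _ n])
qed

lemma foldl_prodm: "A \<in> carrier_mat n n \<Longrightarrow> (\<And>l. f l \<in> carrier_mat n n) \<Longrightarrow>
  foldl (\<lambda>M l. M * f l) A w = A * prodm n (map f w)"
proof (induction w arbitrary: A)
  case Nil then show ?case by simp
next
  case (Cons l w)
  have "foldl (\<lambda>M l. M * f l) A (l # w) = (A * f l) * prodm n (map f w)"
    using Cons by simp
  also have "\<dots> = A * (f l * prodm n (map f w))"
    using Cons prodm_carrier[of "map f w" n] by (intro assoc_mult_mat[of A n n "f l" n _ n]) auto
  finally show ?case by simp
qed

lemma burau_prodm: "burau n w t = prodm n (map (\<lambda>l. glet n l t (1/t)) w)"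
proof -
  have "prodm n (map (\<lambda>l. glet n l t (1/t)) w) \<in> carrier_mat n n"
    by (rule prodm_carrier) auto
  then show ?thesis unfolding burau_def burau_letter_glet
    by (subst foldl_prodm[where n=n]) auto
qed

definition mrel :: "nat \<Rightarrow> (real \<Rightarrow> real mat) \<Rightarrow> dn mat \<Rightarrow> bool" where
  "mrel n F D \<longleftrightarrow> D \<in> carrier_mat n n \<and> (\<forall>h. F h \<in> carrier_mat n n) \<and>
     (\<forall>i<n. \<forall>j<n. rel (\<lambda>h. F h $$ (i, j)) (D $$ (i, j)))"

lemma rel_0: "rel (\<lambda>_. 0) 0" and rel_1: "rel (\<lambda>_. 1) 1"
  by (simp_all add: rel_def)

lemma mrel_mult: assumes "mrel n F D" "mrel n G E" shows "mrel n (\<lambda>h. F h * G h) (D * E)"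
  unfolding mrel_def
proof (intro conjI allI impI)
  show "D * E \<in> carrier_mat n n" using assms by (auto simp: mrel_def)
  show "F h * G h \<in> carrier_mat n n" for h using assms by (auto simp: mrel_def intro!: mult_carrier_mat)
  fix i j assume ij: "i < n" "j < n"
  have "rel (\<lambda>h. \<Sum>k\<in>{0..<n}. F h $$ (i, k) * G h $$ (k, j)) (\<Sum>k\<in>{0..<n}. D $$ (i, k) * E $$ (k, j))"
    using assms ij by (intro rel_sum rel_mult) (auto simp: mrel_def)
  moreover have "(\<lambda>h. (F h * G h) $$ (i, j)) = (\<lambda>h. \<Sum>k\<in>{0..<n}. F h $$ (i, k) * G h $$ (k, j))"
  proof
    fix h
    from assms have "F h \<in> carrier_mat n n" "G h \<in> carrier_mat n n" by (auto simp: mrel_def)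
    with ij show "(F h * G h) $$ (i, j) = (\<Sum>k\<in>{0..<n}. F h $$ (i, k) * G h $$ (k, j))"
      by (simp add: scalar_prod_def)
  qed
  moreover have "(D * E) $$ (i, j) = (\<Sum>k\<in>{0..<n}. D $$ (i, k) * E $$ (k, j))"
    using assms ij by (auto simp: mrel_def scalar_prod_def)
  ultimately show "rel (\<lambda>h. (F h * G h) $$ (i, j)) ((D * E) $$ (i, j))" by simp
qed

lemma cst_0[simp]: "cst 0 = 0" and cst_1[simp]: "cst 1 = 1"
  by (simp_all add: cst_def zero_dn_def one_dn_def)

lemma mrel_one: "mrel n (\<lambda>_. 1\<^sub>m n) (1\<^sub>m n)"
  by (auto simp: mrel_def rel_0 rel_1)

lemma mrel_prodm: "list_all2 (mrel n) Fs Ds \<Longrightarrow>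
  mrel n (\<lambda>h. prodm n (map (\<lambda>F. F h) Fs)) (prodm n Ds)"
proof (induction Fs Ds rule: list_all2_induct)
  case Nil then show ?case by (simp add: mrel_one)
next
  case (Cons F Fs D Ds) then show ?case using mrel_mult[of n F D] by simp
qed

lemma mrel_sub_smult: assumes "mrel n F D"
  shows "mrel n (\<lambda>h. 1\<^sub>m n - x \<cdot>\<^sub>m F h) (1\<^sub>m n - cst x \<cdot>\<^sub>m D)"
  unfolding mrel_def
proof (intro conjI allI impI)
  show "1\<^sub>m n - cst x \<cdot>\<^sub>m D \<in> carrier_mat n n" using assms by (auto simp: mrel_def)
  show "1\<^sub>m n - x \<cdot>\<^sub>m F h \<in> carrier_mat n n" for h
  proof -
    from assms have "F h \<in> carrier_mat n n" by (simp add: mrel_def)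
    then show ?thesis by (intro minus_carrier_mat smult_carrier_mat)
  qed
  fix i j assume ij: "i < n" "j < n"
  have r: "rel (\<lambda>h. (if i = j then 1 else 0) - x * F h $$ (i, j)) ((if i = j then 1 else 0) - cst x * D $$ (i, j))"
    using assms ij by (intro rel_diff rel_mult) (auto simp: mrel_def rel_0 rel_1 rel_const)
  moreover have "(\<lambda>h. (1\<^sub>m n - x \<cdot>\<^sub>m F h) $$ (i, j)) = (\<lambda>h. (if i = j then 1 else 0) - x * F h $$ (i, j))"
  proof
    fix h
    from assms have "F h \<in> carrier_mat n n" by (auto simp: mrel_def)
    with ij show "(1\<^sub>m n - x \<cdot>\<^sub>m F h) $$ (i, j) = (if i = j then 1 else 0) - x * F h $$ (i, j)"
      by simp
  qed
  moreover have "(1\<^sub>m n - cst x \<cdot>\<^sub>m D) $$ (i, j) = (if i = j then 1 else 0) - cst x * D $$ (i, j)"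
    using assms ij by (auto simp: mrel_def)
  ultimately show "rel (\<lambda>h. (1\<^sub>m n - x \<cdot>\<^sub>m F h) $$ (i, j)) ((1\<^sub>m n - cst x \<cdot>\<^sub>m D) $$ (i, j))"
    by simp
qed

lemma rel_det: assumes "mrel n F D" shows "rel (\<lambda>h. det (F h)) (det D)"
proof -
  have "rel (\<lambda>h. \<Sum>p\<in>{p. p permutes {0..<n}}. of_int (sign p) * (\<Prod>i=0..<n. F h $$ (i, p i)))
            (\<Sum>p\<in>{p. p permutes {0..<n}}. of_int (sign p) * (\<Prod>i=0..<n. D $$ (i, p i)))"
  proof (intro rel_sum rel_mult rel_of_int rel_prod)
    fix p i assume "p \<in> {p. p permutes {0..<n}}" "i \<in> {0..<n}"
    then have "i < n" "p i < n" by (auto simp: permutes_in_image)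
    then show "rel (\<lambda>h. F h $$ (i, p i)) (D $$ (i, p i))" using assms by (auto simp: mrel_def)
  qed (auto simp: finite_permutations)
  moreover have "(\<lambda>h. det (F h)) = (\<lambda>h. \<Sum>p\<in>{p. p permutes {0..<n}}. of_int (sign p) * (\<Prod>i=0..<n. F h $$ (i, p i)))"
  proof
    fix h from assms have "F h \<in> carrier_mat n n" by (auto simp: mrel_def)
    then show "det (F h) = (\<Sum>p\<in>{p. p permutes {0..<n}}. of_int (sign p) * (\<Prod>i=0..<n. F h $$ (i, p i)))"
      by (rule det_def')
  qed
  moreover have "det D = (\<Sum>p\<in>{p. p permutes {0..<n}}. of_int (sign p) * (\<Prod>i=0..<n. D $$ (i, p i)))"
    using assms by (intro det_def') (auto simp: mrel_def)
  ultimately show ?thesis by simp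
qed

definition T1 :: dn where "T1 = DN 1 (\<lambda>_. 1)"
definition Ti1 :: dn where "Ti1 = DN 1 (\<lambda>_. -1)"

lemma rel_exp: "rel (\<lambda>h. exp h) T1"
  unfolding rel_def T1_def by (auto intro!: derivative_eq_intros)
lemma rel_inv_exp: "rel (\<lambda>h. 1 / exp h) Ti1"
proof -
  have "((\<lambda>h. exp (- h)) has_real_derivative -1) (at 0)"
    by (auto intro!: derivative_eq_intros)
  then show ?thesis unfolding rel_def Ti1_def by (simp add: exp_minus field_simps)
qed

lemma rel_if: "rel f d \<Longrightarrow> rel g e \<Longrightarrow> rel (\<lambda>h. if c then f h else g h) (if c then d else e)"
  by (cases c) auto

lemma mrel_glet: assumes "rel ft t" "rel fti ti"
  shows "mrel n (\<lambda>h. glet n l (ft h) (fti h)) (glet n l t ti)"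
  unfolding mrel_def
proof (intro conjI allI impI)
  fix a b assume ab: "a < n" "b < n"
  show "rel (\<lambda>h. glet n l (ft h) (fti h) $$ (a, b)) (glet n l t ti $$ (a, b))"
  proof (cases "snd l = 1")
    case True show ?thesis unfolding glet_def gen_def geni_def
      by (simp only: if_P[OF True] index_mat[OF ab] case_prod_conv) (intro rel_if rel_diff rel_0 rel_1 assms)
  next
    case False show ?thesis unfolding glet_def gen_def geni_def
      by (simp only: if_not_P[OF False] index_mat[OF ab] case_prod_conv) (intro rel_if rel_diff rel_0 rel_1 assms)
  qed
qed auto

lemma rel_D: "rel (\<lambda>h. det (1\<^sub>m n - x \<cdot>\<^sub>m burau n w (exp h)))
   (det (1\<^sub>m n - cst x \<cdot>\<^sub>m prodm n (map (\<lambda>l. glet n l T1 Ti1) w)))"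
proof -
  have "list_all2 (mrel n) (map (\<lambda>l h. glet n l (exp h) (1 / exp h)) w) (map (\<lambda>l. glet n l T1 Ti1) w)"
    by (auto simp: list_all2_conv_all_nth intro!: mrel_glet rel_exp rel_inv_exp)
  from mrel_prodm[OF this] have "mrel n (\<lambda>h. burau n w (exp h)) (prodm n (map (\<lambda>l. glet n l T1 Ti1) w))"
    by (simp add: burau_prodm comp_def)
  then show ?thesis by (rule rel_det[OF mrel_sub_smult])
qed


lemma map_prodm: assumes "comm_ring_hom hm" "\<And>M. M \<in> set Ms \<Longrightarrow> M \<in> carrier_mat n n"
  shows "map_mat hm (prodm n Ms) = prodm n (map (map_mat hm) Ms)"
  using assms(2)
proof (induction Ms)
  case Nil
  interpret comm_ring_hom hm by (rule assms(1))
  show ?case by (simp add: mat_hom_one)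
next
  case (Cons M Ms)
  interpret comm_ring_hom hm by (rule assms(1))
  have "prodm n Ms \<in> carrier_mat n n" using Cons by (intro prodm_carrier) auto
  then show ?case using Cons by (simp add: mat_hom_mult[of M n n _ n])
qed

lemma map_glet: assumes "comm_ring_hom hm"
  shows "map_mat hm (glet n l t ti) = glet n l (hm t) (hm ti)"
proof -
  interpret comm_ring_hom hm by (rule assms(1))
  show ?thesis by (rule eq_matI) (auto simp: glet_def gen_def geni_def hom_distribs)
qed

lemma map_IX: assumes "comm_ring_hom hm" "hm c = c" "B \<in> carrier_mat n n"
  shows "map_mat hm (1\<^sub>m n - c \<cdot>\<^sub>m B) = 1\<^sub>m n - c \<cdot>\<^sub>m map_mat hm B"
proof -
  interpret comm_ring_hom hm by (rule assms(1))
  show ?thesis using assms(2,3) by (intro eq_matI) (auto simp: hom_distribs)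
qed

lemma det_hom_IX: assumes "comm_ring_hom hm" "hm c = c" "B \<in> carrier_mat n n"
  shows "det (1\<^sub>m n - c \<cdot>\<^sub>m map_mat hm B) = hm (det (1\<^sub>m n - c \<cdot>\<^sub>m B))"
proof -
  interpret comm_ring_hom hm by (rule assms(1))
  show ?thesis using map_IX[OF assms] hom_det by metis
qed

lemma sig_cst[simp]: "sig k (cst x) = cst x" and prj_cst[simp]: "prj r (cst x) = cst x"
  by (simp_all add: sig_def prj_def cst_def)
lemma du_sig: "du (sig k d) i = (\<Sum>r<k. du d r)" and du_prj: "du (prj r d) i = du d r"
  by (simp_all add: sig_def prj_def)

definition Tm :: "nat \<Rightarrow> dn" where "Tm r = DN 1 (\<lambda>j. if j = r then 1 else 0)"
definition Tim :: "nat \<Rightarrow> dn" where "Tim r = DN 1 (\<lambda>j. if j = r then -1 else 0)"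

lemma sig_Tm: "j < k \<Longrightarrow> sig k (Tm j) = T1" and sig_Tim: "j < k \<Longrightarrow> sig k (Tim j) = Ti1"
  by (simp_all add: sig_def Tm_def Tim_def T1_def Ti1_def fun_eq_iff)
lemma prj_Tm: "prj r (Tm j) = (if j = r then T1 else 1)" and prj_Tim: "prj r (Tim j) = (if j = r then Ti1 else 1)"
  by (auto simp: prj_def Tm_def Tim_def T1_def Ti1_def one_dn_def fun_eq_iff)

definition Bm :: "nat \<Rightarrow> letter list \<Rightarrow> dn mat" where
  "Bm n w = prodm n (map (\<lambda>j. glet n (w ! j) (Tm j) (Tim j)) [0..<length w])"

definition Br :: "nat \<Rightarrow> letter list \<Rightarrow> nat \<Rightarrow> dn mat" where
  "Br n w r = prodm n (map (\<lambda>j. glet n (w ! j) (if j = r then T1 else 1) (if j = r then Ti1 else 1)) [0..<length w])"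

lemma Bm_carrier: "Bm n w \<in> carrier_mat n n"
  unfolding Bm_def by (rule prodm_carrier) auto

lemma sig_Bm: "map_mat (sig (length w)) (Bm n w) = prodm n (map (\<lambda>l. glet n l T1 Ti1) w)"
proof -
  have "map_mat (sig (length w)) (Bm n w) =
     prodm n (map (map_mat (sig (length w))) (map (\<lambda>j. glet n (w ! j) (Tm j) (Tim j)) [0..<length w]))"
    unfolding Bm_def by (rule map_prodm[OF sig_hom]) auto
  also have "\<dots> = prodm n (map (\<lambda>j. glet n (w ! j) T1 Ti1) [0..<length w])"
    by (intro arg_cong[where f="prodm n"] map_cong) (auto simp: map_glet[OF sig_hom] sig_Tm sig_Tim)
  also have "map (\<lambda>j. glet n (w ! j) T1 Ti1) [0..<length w] = map (\<lambda>l. glet n l T1 Ti1) w"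
    by (rule nth_equalityI) auto
  finally show ?thesis .
qed

lemma prj_Bm: "map_mat (prj r) (Bm n w) = Br n w r"
proof -
  have "map_mat (prj r) (Bm n w) =
     prodm n (map (map_mat (prj r)) (map (\<lambda>j. glet n (w ! j) (Tm j) (Tim j)) [0..<length w]))"
    unfolding Bm_def by (rule map_prodm[OF prj_hom]) auto
  then show ?thesis by (simp add: map_glet[OF prj_hom] prj_Tm prj_Tim Br_def comp_def)
qed

lemma deriv_decomp:
  "du (det (1\<^sub>m n - cst x \<cdot>\<^sub>m prodm n (map (\<lambda>l. glet n l T1 Ti1) w))) 0 =
   (\<Sum>r<length w. du (det (1\<^sub>m n - cst x \<cdot>\<^sub>m Br n w r)) 0)"
proof -
  have "det (1\<^sub>m n - cst x \<cdot>\<^sub>m prodm n (map (\<lambda>l. glet n l T1 Ti1) w)) =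
        sig (length w) (det (1\<^sub>m n - cst x \<cdot>\<^sub>m Bm n w))"
    by (subst sig_Bm[symmetric]) (rule det_hom_IX[OF sig_hom sig_cst Bm_carrier])
  moreover have "det (1\<^sub>m n - cst x \<cdot>\<^sub>m Br n w r) = prj r (det (1\<^sub>m n - cst x \<cdot>\<^sub>m Bm n w))" for r
    by (subst prj_Bm[symmetric]) (rule det_hom_IX[OF prj_hom prj_cst Bm_carrier])
  ultimately show ?thesis by (simp add: du_sig du_prj)
qed


definition pmat :: "nat \<Rightarrow> (nat \<Rightarrow> nat) \<Rightarrow> 'a::comm_ring_1 mat" where
  "pmat n g = mat n n (\<lambda>(a, b). if Suc b = g (Suc a) then 1 else 0)"

lemma pmat_carrier[simp]: "pmat n g \<in> carrier_mat n n"
  by (simp add: pmat_def)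

definition okw :: "nat \<Rightarrow> letter list \<Rightarrow> bool" where
  "okw n ws \<longleftrightarrow> (\<forall>l\<in>set ws. 1 \<le> fst l \<and> fst l < n)"

lemma glet_11: "1 \<le> fst l \<Longrightarrow> fst l < n \<Longrightarrow> glet n l 1 1 = pmat n (swap_pos (fst l))"
  by (rule eq_matI) (auto simp: glet_def gen_def geni_def pmat_def swap_pos_def)

lemma pmat_id: "pmat n (\<lambda>p. p) = 1\<^sub>m n"
  by (rule eq_matI) (auto simp: pmat_def)

lemma pmat_mult: assumes "\<And>p. 1 \<le> p \<Longrightarrow> p \<le> n \<Longrightarrow> 1 \<le> g p \<and> g p \<le> n"
  shows "pmat n g * pmat n h = pmat n (\<lambda>p. h (g p))"
proof (rule eq_matI)
  fix a b assume ab: "a < dim_row (pmat n (\<lambda>p. h (g p)) :: 'a mat)" "b < dim_col (pmat n (\<lambda>p. h (g p)) :: 'a mat)"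
  then have ab': "a < n" "b < n" by (auto simp: pmat_def)
  define c0 where "c0 = g (Suc a) - 1"
  have c0: "c0 < n" "Suc c0 = g (Suc a)" using assms[of "Suc a"] ab' by (auto simp: c0_def)
  have "(pmat n g * pmat n h :: 'a mat) $$ (a, b) =
        (\<Sum>c\<in>{0..<n}. (if Suc c = g (Suc a) then 1 else 0) * (if Suc b = h (Suc c) then 1 else 0))"
    using ab' by (simp add: pmat_def scalar_prod_def)
  also have "\<dots> = (\<Sum>c\<in>{0..<n}. if c = c0 then (if Suc b = h (Suc c0) then 1 else 0) else (0::'a))"
    using c0 by (intro sum.cong) auto
  also have "\<dots> = (if Suc b = h (g (Suc a)) then 1 else 0)"
    using c0 by simp
  finally show "(pmat n g * pmat n h :: 'a mat) $$ (a, b) = pmat n (\<lambda>p. h (g p)) $$ (a, b)"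
    using ab' by (simp add: pmat_def)
qed (auto simp: pmat_def)

lemma swap_pos_range: "1 \<le> i \<Longrightarrow> i < n \<Longrightarrow> 1 \<le> p \<Longrightarrow> p \<le> n \<Longrightarrow> 1 \<le> swap_pos i p \<and> swap_pos i p \<le> n"
  by (auto simp: swap_pos_def)

lemma follow_Nil[simp]: "follow [] p = p" and follow_Cons[simp]: "follow (l # ws) p = follow ws (swap_pos (fst l) p)"
  by (simp_all add: follow_def)

lemma follow_append: "follow (ws @ vs) p = follow vs (follow ws p)"
  by (simp add: follow_def)

lemma follow_range: "okw n ws \<Longrightarrow> 1 \<le> p \<Longrightarrow> p \<le> n \<Longrightarrow> 1 \<le> follow ws p \<and> follow ws p \<le> n"
proof (induction ws arbitrary: p)
  case Nil then show ?case by simp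
next
  case (Cons l ws) then show ?case using swap_pos_range[of "fst l" n p] by (simp add: okw_def)
qed

lemma swap_pos_swap_pos[simp]: "swap_pos i (swap_pos i p) = p"
  by (simp add: swap_pos_def)

lemma follow_rev: "follow (rev ws) (follow ws p) = p"
  by (induction ws arbitrary: p) (simp_all add: follow_append)

lemma follow_rev': "follow ws (follow (rev ws) p) = p"
  using follow_rev[of "rev ws" p] by simp

lemma prodm_pmat: "okw n ws \<Longrightarrow> prodm n (map (\<lambda>l. pmat n (swap_pos (fst l))) ws) = pmat n (follow ws)"
proof (induction ws)
  case Nil then show ?case by (simp add: pmat_id[symmetric])
next
  case (Cons l ws)
  then have "okw n ws" "1 \<le> fst l" "fst l < n" by (auto simp: okw_def)
  moreover have "pmat n (swap_pos (fst l)) * pmat n (follow ws) = pmat n (\<lambda>a. follow ws (swap_pos (fst l) a))"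
    by (rule pmat_mult) (use swap_pos_range[OF \<open>1 \<le> fst l\<close> \<open>fst l < n\<close>] in auto)
  ultimately show ?case using Cons by simp
qed

lemma det_conj: fixes U V Y :: "'a::comm_ring_1 mat"
  assumes U: "U \<in> carrier_mat n n" and V: "V \<in> carrier_mat n n" and Y: "Y \<in> carrier_mat n n"
    and UV: "U * V = 1\<^sub>m n"
  shows "det (1\<^sub>m n - c \<cdot>\<^sub>m (U * Y)) = det (1\<^sub>m n - c \<cdot>\<^sub>m (Y * U))"
proof -
  have YU: "Y * U \<in> carrier_mat n n" using U Y by simp
  have "U * (1\<^sub>m n - c \<cdot>\<^sub>m (Y * U)) = U * 1\<^sub>m n - U * (c \<cdot>\<^sub>m (Y * U))"
    by (rule mult_minus_distrib_mat[OF U one_carrier_mat smult_carrier_mat[OF YU]])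
  also have "U * 1\<^sub>m n = U" by (rule right_mult_one_mat[OF U])
  also have "U * (c \<cdot>\<^sub>m (Y * U)) = c \<cdot>\<^sub>m (U * (Y * U))" by (rule mult_smult_distrib[OF U YU])
  finally have e1: "U * (1\<^sub>m n - c \<cdot>\<^sub>m (Y * U)) = U - c \<cdot>\<^sub>m (U * (Y * U))" .
  then have "U * (1\<^sub>m n - c \<cdot>\<^sub>m (Y * U)) * V = (U - c \<cdot>\<^sub>m (U * (Y * U))) * V" by simp
  also have "\<dots> = U * V - c \<cdot>\<^sub>m (U * (Y * U) * V)"
    using U V YU by (simp add: minus_mult_distrib_mat[of U n n _ V n] mult_smult_assoc_mat[of _ n n V n])
  also have "U * (Y * U) * V = U * Y * (U * V)"
    using U V Y by (simp add: assoc_mult_mat[of U n n "Y * U" n V n] assoc_mult_mat[of Y n n U n V n]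
        assoc_mult_mat[of U n n Y n "U * V" n])
  also have "\<dots> = U * Y" using U Y UV by simp
  finally have eq: "U * (1\<^sub>m n - c \<cdot>\<^sub>m (Y * U)) * V = 1\<^sub>m n - c \<cdot>\<^sub>m (U * Y)" using UV by simp
  have c1: "1\<^sub>m n - c \<cdot>\<^sub>m (Y * U) \<in> carrier_mat n n" using YU by (intro minus_carrier_mat smult_carrier_mat)
  have "det (1\<^sub>m n - c \<cdot>\<^sub>m (U * Y)) = det U * det (1\<^sub>m n - c \<cdot>\<^sub>m (Y * U)) * det V"
    unfolding eq[symmetric] using U V c1 by (simp add: det_mult[of _ n])
  also have "det U * det V = 1" using det_mult[OF U V] UV by simp
  then have "det U * det (1\<^sub>m n - c \<cdot>\<^sub>m (Y * U)) * det V = det (1\<^sub>m n - c \<cdot>\<^sub>m (Y * U))"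
    by (metis mult.commute mult.left_commute mult_1_right)
  finally show ?thesis .
qed

lemma okw_take: "okw n w \<Longrightarrow> okw n (take r w)" and okw_drop: "okw n w \<Longrightarrow> okw n (drop r w)"
  and okw_rev: "okw n w \<Longrightarrow> okw n (rev w)"
  by (auto simp: okw_def dest: in_set_takeD in_set_dropD)

lemma okw_nth: "okw n w \<Longrightarrow> j < length w \<Longrightarrow> 1 \<le> fst (w ! j) \<and> fst (w ! j) < n"
  by (auto simp: okw_def)
lemma okw_nth1: "okw n w \<Longrightarrow> j < length w \<Longrightarrow> 1 \<le> fst (w ! j)"
  and okw_nth2: "okw n w \<Longrightarrow> j < length w \<Longrightarrow> fst (w ! j) < n"
  by (auto simp: okw_def)

lemma Br_split: assumes "okw n w" "r < length w"
  shows "Br n w r = pmat n (follow (take r w)) * (glet n (w ! r) T1 Ti1 * pmat n (follow (drop (Suc r) w)))"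
proof -
  let ?F = "\<lambda>j. glet n (w ! j) (if j = r then T1 else 1) (if j = r then Ti1 else 1)"
  let ?G = "\<lambda>l. pmat n (swap_pos (fst l)) :: dn mat"
  have L: "[0..<length w] = [0..<r] @ r # [Suc r..<length w]"
    using assms(2) by (metis le0 le_add_diff_inverse less_imp_le_nat upt_add_eq_append upt_conv_Cons)
  have A: "map ?F [0..<r] = map ?G (take r w)"
  proof (rule nth_equalityI)
    show "length (map ?F [0..<r]) = length (map ?G (take r w))" using assms(2) by simp
    fix i assume "i < length (map ?F [0..<r])"
    then have i: "i < r" "i < length w" using assms(2) by auto
    show "map ?F [0..<r] ! i = map ?G (take r w) ! i"
      using i glet_11[OF okw_nth1[OF assms(1) i(2)] okw_nth2[OF assms(1) i(2)]] by simp
  qed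
  have B: "map ?F [Suc r..<length w] = map ?G (drop (Suc r) w)"
  proof (rule nth_equalityI)
    show "length (map ?F [Suc r..<length w]) = length (map ?G (drop (Suc r) w))" using assms(2) by simp
    fix i assume "i < length (map ?F [Suc r..<length w])"
    then have i: "Suc r + i \<noteq> r" "Suc r + i < length w" using assms(2) by auto
    show "map ?F [Suc r..<length w] ! i = map ?G (drop (Suc r) w) ! i"
      using i glet_11[OF okw_nth1[OF assms(1) i(2)] okw_nth2[OF assms(1) i(2)]] by simp
  qed
  have "Br n w r = prodm n (map ?F [0..<r] @ ?F r # map ?F [Suc r..<length w])"
    unfolding Br_def L by simp
  also have "\<dots> = prodm n (map ?F [0..<r]) * prodm n (?F r # map ?F [Suc r..<length w])"
    by (rule prodm_append) auto
  also have "\<dots> = pmat n (follow (take r w)) * (glet n (w ! r) T1 Ti1 * pmat n (follow (drop (Suc r) w)))"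
    unfolding A prodm_Cons B using assms by (simp add: prodm_pmat okw_take okw_drop)
  finally show ?thesis .
qed

lemma det_Br: assumes "okw n w" "r < length w"
  shows "det (1\<^sub>m n - c \<cdot>\<^sub>m Br n w r) = det (1\<^sub>m n - c \<cdot>\<^sub>m (glet n (w ! r) T1 Ti1 * pmat n (smoothed_turn w r)))"
proof -
  let ?U = "pmat n (follow (take r w)) :: dn mat"
  let ?V = "pmat n (follow (rev (take r w))) :: dn mat"
  let ?D = "pmat n (follow (drop (Suc r) w)) :: dn mat"
  let ?M = "glet n (w ! r) T1 Ti1"
  have UV: "?U * ?V = 1\<^sub>m n"
    using follow_range[OF okw_take[OF assms(1)]] by (subst pmat_mult) (auto simp: follow_rev pmat_id)
  have DU: "?D * ?U = pmat n (smoothed_turn w r)"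
    using follow_range[OF okw_drop[OF assms(1)]] by (subst pmat_mult) (auto simp: smoothed_turn_def[abs_def])
  have "det (1\<^sub>m n - c \<cdot>\<^sub>m Br n w r) = det (1\<^sub>m n - c \<cdot>\<^sub>m (?U * (?M * ?D)))"
    using Br_split[OF assms] by simp
  also have "\<dots> = det (1\<^sub>m n - c \<cdot>\<^sub>m ((?M * ?D) * ?U))"
    by (rule det_conj[OF _ _ _ UV]) (auto intro!: mult_carrier_mat[OF glet_carrier pmat_carrier])
  also have "(?M * ?D) * ?U = ?M * (?D * ?U)" by (rule assoc_mult_mat[of _ n n _ n _ n]) auto
  finally show ?thesis unfolding DU .
qed


lemma du_prod_0: "(\<And>a. a \<in> T \<Longrightarrow> du (f a) 0 = 0) \<Longrightarrow> du (\<Prod>a\<in>T. f a) 0 = 0"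
proof (induction T rule: infinite_finite_induct)
  case (insert x F) then show ?case by simp
qed auto

lemma du_prod_single: assumes "finite S" "i0 \<in> S" "\<And>a. a \<in> S - {i0} \<Longrightarrow> du (f a) 0 = 0"
  shows "du (\<Prod>a\<in>S. f a) 0 = du (f i0) 0 * (\<Prod>a\<in>S - {i0}. re (f a))"
proof -
  have "(\<Prod>a\<in>S. f a) = f i0 * (\<Prod>a\<in>S - {i0}. f a)" using assms by (simp add: prod.remove)
  moreover have "du (\<Prod>a\<in>S - {i0}. f a) 0 = 0" using assms by (intro du_prod_0) auto
  ultimately show ?thesis by simp
qed

lemma du_det_row:
  fixes A :: "dn mat" and R1 R2 :: "real mat"
  assumes A: "A \<in> carrier_mat n n" and R1: "R1 \<in> carrier_mat n n" and R2: "R2 \<in> carrier_mat n n"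
    and i0: "i0 < n"
    and off: "\<And>a b. a < n \<Longrightarrow> b < n \<Longrightarrow> a \<noteq> i0 \<Longrightarrow>
        du (A $$ (a, b)) 0 = 0 \<and> re (A $$ (a, b)) = R1 $$ (a, b) \<and> R2 $$ (a, b) = R1 $$ (a, b)"
    and on: "\<And>b. b < n \<Longrightarrow> du (A $$ (i0, b)) 0 = R1 $$ (i0, b) - R2 $$ (i0, b)"
  shows "du (det A) 0 = det R1 - det R2"
proof -
  let ?P = "{p. p permutes {0..<n}}"
  have tm: "du (of_int (sign p) * (\<Prod>a=0..<n. A $$ (a, p a))) 0 =
      of_int (sign p) * (\<Prod>a=0..<n. R1 $$ (a, p a)) - of_int (sign p) * (\<Prod>a=0..<n. R2 $$ (a, p a))"
    if p: "p \<in> ?P" for p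
  proof -
    have pa: "a < n \<Longrightarrow> p a < n" for a using p by (auto simp: permutes_in_image)
    have "du (\<Prod>a=0..<n. A $$ (a, p a)) 0 = du (A $$ (i0, p i0)) 0 * (\<Prod>a\<in>{0..<n} - {i0}. re (A $$ (a, p a)))"
      using i0 pa off by (intro du_prod_single) auto
    also have "\<dots> = (R1 $$ (i0, p i0) - R2 $$ (i0, p i0)) * (\<Prod>a\<in>{0..<n} - {i0}. R1 $$ (a, p a))"
      using pa off on i0 by (intro arg_cong2[where f="(*)"] prod.cong) auto
    also have "\<dots> = (\<Prod>a=0..<n. R1 $$ (a, p a)) - (\<Prod>a=0..<n. R2 $$ (a, p a))"
    proof -
      have "(\<Prod>a\<in>{0..<n} - {i0}. R2 $$ (a, p a)) = (\<Prod>a\<in>{0..<n} - {i0}. R1 $$ (a, p a))"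
        using pa off by (intro prod.cong) auto
      then show ?thesis using i0
        by (simp add: prod.remove[of "{0..<n}" i0] algebra_simps)
    qed
    finally have X: "du (\<Prod>a=0..<n. A $$ (a, p a)) 0 = (\<Prod>a=0..<n. R1 $$ (a, p a)) - (\<Prod>a=0..<n. R2 $$ (a, p a))" .
    show ?thesis by (simp add: X right_diff_distrib)
  qed
  have "du (det A) 0 = (\<Sum>p\<in>?P. du (of_int (sign p) * (\<Prod>a=0..<n. A $$ (a, p a))) 0)"
    by (simp add: det_def'[OF A] del: du_mult)
  also have "\<dots> = (\<Sum>p\<in>?P. of_int (sign p) * (\<Prod>a=0..<n. R1 $$ (a, p a)) - of_int (sign p) * (\<Prod>a=0..<n. R2 $$ (a, p a)))"
    by (rule sum.cong) (use tm in auto)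
  also have "\<dots> = det R1 - det R2"
    by (simp add: sum_subtractf det_def'[OF R1] det_def'[OF R2])
  finally show ?thesis .
qed

definition ind :: "bool \<Rightarrow> 'a::comm_ring_1" where "ind P = (if P then 1 else 0)"

lemma row_sum2: fixes c1 c2 n :: nat assumes "c1 < n" "c2 < n" "c1 \<noteq> c2" "\<And>c. c < n \<Longrightarrow> c \<noteq> c1 \<Longrightarrow> c \<noteq> c2 \<Longrightarrow> g c = 0"
  shows "(\<Sum>c\<in>{0..<n}. g c) = g c1 + g c2"
proof -
  have "(\<Sum>c\<in>{0..<n}. g c) = (\<Sum>c\<in>{c1, c2}. g c)"
    using assms by (intro sum.mono_neutral_right) auto
  then show ?thesis using assms by simp
qed

lemma row_sum1: fixes c1 n :: nat assumes "c1 < n" "\<And>c. c < n \<Longrightarrow> c \<noteq> c1 \<Longrightarrow> g c = 0"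
  shows "(\<Sum>c\<in>{0..<n}. g c) = g c1"
proof -
  have "(\<Sum>c\<in>{0..<n}. g c) = (\<Sum>c\<in>{c1}. g c)"
    using assms by (intro sum.mono_neutral_right) auto
  then show ?thesis by simp
qed

lemma MP_entry: assumes "a < n" "b < n" "M \<in> carrier_mat n n"
  shows "(M * pmat n q) $$ (a, b) = (\<Sum>c\<in>{0..<n}. M $$ (a, c) * ind (Suc b = q (Suc c)))"
  using assms by (simp add: pmat_def scalar_prod_def ind_def)

lemma MP_pos: assumes "1 \<le> i" "i < n" "a < n" "b < n"
  shows "(glet n (i, 1) t ti * pmat n q) $$ (a, b) =
    (if a = i - 1 then (1 - t) * ind (Suc b = q i) + t * ind (Suc b = q (Suc i))
     else ind (Suc b = q (swap_pos i (Suc a))))"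
proof -
  have M: "glet n (i, 1) t ti $$ (a', c) = (if a' = i - 1 \<and> c = i - 1 then 1 - t
     else if a' = i - 1 \<and> c = i then t else if a' = i \<and> c = i - 1 then 1 else if a' = i \<and> c = i then 0
     else if a' = c then 1 else 0)" if "c < n" "a' < n" for c a'
    using assms that by (simp add: glet_def gen_def)
  show ?thesis
  proof (cases "a = i - 1")
    case True
    have "(\<Sum>c\<in>{0..<n}. glet n (i, 1) t ti $$ (a, c) * ind (Suc b = q (Suc c))) =
      glet n (i, 1) t ti $$ (a, i - 1) * ind (Suc b = q (Suc (i - 1))) + glet n (i, 1) t ti $$ (a, i) * ind (Suc b = q (Suc i))"
      using assms True by (intro row_sum2) (auto simp: M)
    then show ?thesis using assms True by (auto simp add: MP_entry M)
  next
    case False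
    show ?thesis
    proof (cases "a = i")
      case True
      have "(\<Sum>c\<in>{0..<n}. glet n (i, 1) t ti $$ (a, c) * ind (Suc b = q (Suc c))) =
        glet n (i, 1) t ti $$ (a, i - 1) * ind (Suc b = q (Suc (i - 1)))"
        using assms True by (intro row_sum1) (auto simp: M)
      then show ?thesis using assms True False by (auto simp add: MP_entry M swap_pos_def)
    next
      case F2: False
      have "(\<Sum>c\<in>{0..<n}. glet n (i, 1) t ti $$ (a, c) * ind (Suc b = q (Suc c))) =
        glet n (i, 1) t ti $$ (a, a) * ind (Suc b = q (Suc a))"
        using assms False F2 by (intro row_sum1) (auto simp: M)
      then show ?thesis using assms F2 False by (auto simp add: MP_entry M swap_pos_def)
    qed
  qed
qed

lemma MP_neg: assumes "1 \<le> i" "i < n" "a < n" "b < n" "e \<noteq> 1"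
  shows "(glet n (i, e) t ti * pmat n q) $$ (a, b) =
    (if a = i then ti * ind (Suc b = q i) + (1 - ti) * ind (Suc b = q (Suc i))
     else ind (Suc b = q (swap_pos i (Suc a))))"
proof -
  have M: "glet n (i, e) t ti $$ (a', c) = (if a' = i - 1 \<and> c = i - 1 then 0
     else if a' = i - 1 \<and> c = i then 1 else if a' = i \<and> c = i - 1 then ti else if a' = i \<and> c = i then 1 - ti
     else if a' = c then 1 else 0)" if "c < n" "a' < n" for c a'
    using assms that by (simp add: glet_def geni_def)
  show ?thesis
  proof (cases "a = i")
    case True
    have "(\<Sum>c\<in>{0..<n}. glet n (i, e) t ti $$ (a, c) * ind (Suc b = q (Suc c))) =
      glet n (i, e) t ti $$ (a, i - 1) * ind (Suc b = q (Suc (i - 1))) + glet n (i, e) t ti $$ (a, i) * ind (Suc b = q (Suc i))"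
      using assms True by (intro row_sum2) (auto simp: M)
    then show ?thesis using assms True by (auto simp add: MP_entry M)
  next
    case False
    show ?thesis
    proof (cases "a = i - 1")
      case True
      have "(\<Sum>c\<in>{0..<n}. glet n (i, e) t ti $$ (a, c) * ind (Suc b = q (Suc c))) =
        glet n (i, e) t ti $$ (a, i) * ind (Suc b = q (Suc i))"
        using assms True by (intro row_sum1) (auto simp: M)
      then show ?thesis using assms True False by (auto simp add: MP_entry M swap_pos_def)
    next
      case F2: False
      have "(\<Sum>c\<in>{0..<n}. glet n (i, e) t ti $$ (a, c) * ind (Suc b = q (Suc c))) =
        glet n (i, e) t ti $$ (a, a) * ind (Suc b = q (Suc a))"
        using assms False F2 by (intro row_sum1) (auto simp: M)
      then show ?thesis using assms F2 False by (auto simp add: MP_entry M swap_pos_def)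
    qed
  qed
qed

lemma re_ind[simp]: "re (ind P) = (if P then 1 else 0)" and du_ind[simp]: "du (ind P) i = 0"
  by (simp_all add: ind_def)
lemma re_T1[simp]: "re T1 = 1" and du_T1[simp]: "du T1 i = 1" and re_Ti1[simp]: "re Ti1 = 1" and du_Ti1[simp]: "du Ti1 i = -1"
  by (simp_all add: T1_def Ti1_def)


lemma dim_pmat[simp]: "dim_row (pmat n g) = n" "dim_col (pmat n g) = n"
  by (simp_all add: pmat_def)
lemma dim_glet[simp]: "dim_row (glet n l t ti) = n" "dim_col (glet n l t ti) = n"
  by (simp_all add: glet_def gen_def geni_def)

lemma IX_entry: "B \<in> carrier_mat n n \<Longrightarrow> a < n \<Longrightarrow> b < n \<Longrightarrow>
   (1\<^sub>m n - c \<cdot>\<^sub>m B) $$ (a, b) = (if a = b then 1 else 0) - c * B $$ (a, b)"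
  by simp

lemma pmat_entry: "a < n \<Longrightarrow> b < n \<Longrightarrow> pmat n g $$ (a, b) = (if Suc b = g (Suc a) then 1 else 0)"
  by (simp add: pmat_def)


lemma IXP_entry: assumes ab: "a < n" "b < n"
  shows "(1\<^sub>m n - x \<cdot>\<^sub>m pmat n g) $$ (a, b) =
     (if a = b then 1 else 0) - (x::'a::comm_ring_1) * (if Suc b = g (Suc a) then 1 else 0)"
proof -
  have "(1\<^sub>m n - x \<cdot>\<^sub>m pmat n g) $$ (a, b) = (1\<^sub>m n :: 'a mat) $$ (a, b) - (x \<cdot>\<^sub>m pmat n g) $$ (a, b)"
    using ab by (intro index_minus_mat) auto
  also have "\<dots> = (if a = b then 1 else 0) - x * pmat n g $$ (a, b)"
    using ab by simp
  also have "pmat n g $$ (a, b) = (if Suc b = g (Suc a) then 1 else (0::'a))"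
    by (rule pmat_entry[OF ab])
  finally show ?thesis by simp
qed
lemma du_cross_pos: assumes "1 \<le> i" "i < n"
  shows "du (det (1\<^sub>m n - cst x \<cdot>\<^sub>m (glet n (i, 1) T1 Ti1 * pmat n q))) 0 =
    det (1\<^sub>m n - x \<cdot>\<^sub>m pmat n (\<lambda>p. q (swap_pos i p))) -
    det (1\<^sub>m n - x \<cdot>\<^sub>m pmat n (\<lambda>p. if p = i then q p else q (swap_pos i p)))"
proof (rule du_det_row[of _ n _ _ "i - 1"])
  let ?MP = "glet n (i, 1) T1 Ti1 * pmat n q"
  have MPc: "?MP \<in> carrier_mat n n" by (rule mult_carrier_mat[OF glet_carrier pmat_carrier])
  fix a b assume ab: "a < n" "b < n" "a \<noteq> i - 1"
  then have sa: "Suc a \<noteq> i" by auto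
  have e1: "(1\<^sub>m n - cst x \<cdot>\<^sub>m ?MP) $$ (a, b) = (if a = b then 1 else 0) - cst x * ind (Suc b = q (swap_pos i (Suc a)))"
  proof -
    have "?MP $$ (a, b) = ind (Suc b = q (swap_pos i (Suc a)))"
      using MP_pos[OF assms ab(1,2), of T1 Ti1 q] ab(3) by simp
    then show ?thesis by (simp add: IX_entry[OF MPc ab(1,2)])
  qed
  have e2: "(1\<^sub>m n - x \<cdot>\<^sub>m pmat n (\<lambda>p. q (swap_pos i p))) $$ (a, b) =
     (if a = b then 1 else 0) - x * (if Suc b = q (swap_pos i (Suc a)) then 1 else 0)"
    by (rule IXP_entry[OF ab(1,2)])
  have e3: "(1\<^sub>m n - x \<cdot>\<^sub>m pmat n (\<lambda>p. if p = i then q p else q (swap_pos i p))) $$ (a, b) =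
     (if a = b then 1 else 0) - x * (if Suc b = q (swap_pos i (Suc a)) then 1 else 0)"
    using IXP_entry[OF ab(1,2), of x "\<lambda>p. if p = i then q p else q (swap_pos i p)"] sa by simp
  show "du ((1\<^sub>m n - cst x \<cdot>\<^sub>m ?MP) $$ (a, b)) 0 = 0 \<and>
         re ((1\<^sub>m n - cst x \<cdot>\<^sub>m ?MP) $$ (a, b)) =
         (1\<^sub>m n - x \<cdot>\<^sub>m pmat n (\<lambda>p. q (swap_pos i p))) $$ (a, b) \<and>
         (1\<^sub>m n - x \<cdot>\<^sub>m pmat n (\<lambda>p. if p = i then q p else q (swap_pos i p))) $$ (a, b) =
         (1\<^sub>m n - x \<cdot>\<^sub>m pmat n (\<lambda>p. q (swap_pos i p))) $$ (a, b)"
    unfolding e1 e2 e3 by simp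
next
  let ?MP = "glet n (i, 1) T1 Ti1 * pmat n q"
  have MPc: "?MP \<in> carrier_mat n n" by (rule mult_carrier_mat[OF glet_carrier pmat_carrier])
  fix b assume b: "b < n"
  have i1: "i - 1 < n" "Suc (i - 1) = i" "i - 1 \<noteq> b \<or> i - 1 = b" using assms by auto
  have sw: "swap_pos i i = Suc i" by (simp add: swap_pos_def)
  have e1: "(1\<^sub>m n - cst x \<cdot>\<^sub>m ?MP) $$ (i - 1, b) = (if i - 1 = b then 1 else 0) -
       cst x * ((1 - T1) * ind (Suc b = q i) + T1 * ind (Suc b = q (Suc i)))"
    using IX_entry[OF MPc i1(1) b] MP_pos[OF assms i1(1) b, of T1 Ti1 q] by simp
  have e2: "(1\<^sub>m n - x \<cdot>\<^sub>m pmat n (\<lambda>p. q (swap_pos i p))) $$ (i - 1, b) =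
     (if i - 1 = b then 1 else 0) - x * (if Suc b = q (Suc i) then 1 else 0)"
    using IXP_entry[OF i1(1) b, of x "\<lambda>p. q (swap_pos i p)"] i1(2) sw by simp
  have e3: "(1\<^sub>m n - x \<cdot>\<^sub>m pmat n (\<lambda>p. if p = i then q p else q (swap_pos i p))) $$ (i - 1, b) =
     (if i - 1 = b then 1 else 0) - x * (if Suc b = q i then 1 else 0)"
    using IXP_entry[OF i1(1) b, of x "\<lambda>p. if p = i then q p else q (swap_pos i p)"] i1(2) by simp
  show "du ((1\<^sub>m n - cst x \<cdot>\<^sub>m ?MP) $$ (i - 1, b)) 0 =
         (1\<^sub>m n - x \<cdot>\<^sub>m pmat n (\<lambda>p. q (swap_pos i p))) $$ (i - 1, b) -
         (1\<^sub>m n - x \<cdot>\<^sub>m pmat n (\<lambda>p. if p = i then q p else q (swap_pos i p))) $$ (i - 1, b)"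
    unfolding e1 e2 e3 by (simp add: algebra_simps)
next
  show "1\<^sub>m n - cst x \<cdot>\<^sub>m (glet n (i, 1) T1 Ti1 * pmat n q) \<in> carrier_mat n n"
    by (intro minus_carrier_mat smult_carrier_mat mult_carrier_mat[OF glet_carrier pmat_carrier])
next
  show "1\<^sub>m n - x \<cdot>\<^sub>m pmat n (\<lambda>p. q (swap_pos i p)) \<in> carrier_mat n n"
    by (intro minus_carrier_mat smult_carrier_mat pmat_carrier)
next
  show "1\<^sub>m n - x \<cdot>\<^sub>m pmat n (\<lambda>p. if p = i then q p else q (swap_pos i p)) \<in> carrier_mat n n"
    by (intro minus_carrier_mat smult_carrier_mat pmat_carrier)
next
  show "i - 1 < n" using assms by simp
qed

lemma du_cross_neg: assumes "1 \<le> i" "i < n" "e \<noteq> 1"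
  shows "du (det (1\<^sub>m n - cst x \<cdot>\<^sub>m (glet n (i, e) T1 Ti1 * pmat n q))) 0 =
    det (1\<^sub>m n - x \<cdot>\<^sub>m pmat n (\<lambda>p. if p = Suc i then q p else q (swap_pos i p))) -
    det (1\<^sub>m n - x \<cdot>\<^sub>m pmat n (\<lambda>p. q (swap_pos i p)))"
proof (rule du_det_row[of _ n _ _ i])
  let ?MP = "glet n (i, e) T1 Ti1 * pmat n q"
  have MPc: "?MP \<in> carrier_mat n n" by (rule mult_carrier_mat[OF glet_carrier pmat_carrier])
  fix a b assume ab: "a < n" "b < n" "a \<noteq> i"
  then have sa: "Suc a \<noteq> Suc i" by auto
  have e1: "(1\<^sub>m n - cst x \<cdot>\<^sub>m ?MP) $$ (a, b) = (if a = b then 1 else 0) - cst x * ind (Suc b = q (swap_pos i (Suc a)))"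
  proof -
    have "?MP $$ (a, b) = ind (Suc b = q (swap_pos i (Suc a)))"
      using MP_neg[OF assms(1,2) ab(1,2) assms(3), of T1 Ti1 q] ab(3) by simp
    then show ?thesis by (simp add: IX_entry[OF MPc ab(1,2)])
  qed
  have e2: "(1\<^sub>m n - x \<cdot>\<^sub>m pmat n (\<lambda>p. q (swap_pos i p))) $$ (a, b) =
     (if a = b then 1 else 0) - x * (if Suc b = q (swap_pos i (Suc a)) then 1 else 0)"
    by (rule IXP_entry[OF ab(1,2)])
  have e3: "(1\<^sub>m n - x \<cdot>\<^sub>m pmat n (\<lambda>p. if p = Suc i then q p else q (swap_pos i p))) $$ (a, b) =
     (if a = b then 1 else 0) - x * (if Suc b = q (swap_pos i (Suc a)) then 1 else 0)"
    using IXP_entry[OF ab(1,2), of x "\<lambda>p. if p = Suc i then q p else q (swap_pos i p)"] sa by simp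
  show "du ((1\<^sub>m n - cst x \<cdot>\<^sub>m ?MP) $$ (a, b)) 0 = 0 \<and>
         re ((1\<^sub>m n - cst x \<cdot>\<^sub>m ?MP) $$ (a, b)) =
         (1\<^sub>m n - x \<cdot>\<^sub>m pmat n (\<lambda>p. if p = Suc i then q p else q (swap_pos i p))) $$ (a, b) \<and>
         (1\<^sub>m n - x \<cdot>\<^sub>m pmat n (\<lambda>p. q (swap_pos i p))) $$ (a, b) =
         (1\<^sub>m n - x \<cdot>\<^sub>m pmat n (\<lambda>p. if p = Suc i then q p else q (swap_pos i p))) $$ (a, b)"
    unfolding e1 e2 e3 by simp
next
  let ?MP = "glet n (i, e) T1 Ti1 * pmat n q"
  have MPc: "?MP \<in> carrier_mat n n" by (rule mult_carrier_mat[OF glet_carrier pmat_carrier])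
  fix b assume b: "b < n"
  have sw: "swap_pos i (Suc i) = i" by (simp add: swap_pos_def)
  have e1: "(1\<^sub>m n - cst x \<cdot>\<^sub>m ?MP) $$ (i, b) = (if i = b then 1 else 0) -
       cst x * (Ti1 * ind (Suc b = q i) + (1 - Ti1) * ind (Suc b = q (Suc i)))"
    using IX_entry[OF MPc assms(2) b] MP_neg[OF assms(1,2) assms(2) b assms(3), of T1 Ti1 q] by simp
  have e2: "(1\<^sub>m n - x \<cdot>\<^sub>m pmat n (\<lambda>p. q (swap_pos i p))) $$ (i, b) =
     (if i = b then 1 else 0) - x * (if Suc b = q i then 1 else 0)"
    using IXP_entry[OF assms(2) b, of x "\<lambda>p. q (swap_pos i p)"] sw by simp
  have e3: "(1\<^sub>m n - x \<cdot>\<^sub>m pmat n (\<lambda>p. if p = Suc i then q p else q (swap_pos i p))) $$ (i, b) =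
     (if i = b then 1 else 0) - x * (if Suc b = q (Suc i) then 1 else 0)"
    using IXP_entry[OF assms(2) b, of x "\<lambda>p. if p = Suc i then q p else q (swap_pos i p)"] by simp
  show "du ((1\<^sub>m n - cst x \<cdot>\<^sub>m ?MP) $$ (i, b)) 0 =
         (1\<^sub>m n - x \<cdot>\<^sub>m pmat n (\<lambda>p. if p = Suc i then q p else q (swap_pos i p))) $$ (i, b) -
         (1\<^sub>m n - x \<cdot>\<^sub>m pmat n (\<lambda>p. q (swap_pos i p))) $$ (i, b)"
    unfolding e1 e2 e3 by (simp add: algebra_simps)
next
  show "1\<^sub>m n - cst x \<cdot>\<^sub>m (glet n (i, e) T1 Ti1 * pmat n q) \<in> carrier_mat n n"
    by (intro minus_carrier_mat smult_carrier_mat mult_carrier_mat[OF glet_carrier pmat_carrier])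
next
  show "1\<^sub>m n - x \<cdot>\<^sub>m pmat n (\<lambda>p. q (swap_pos i p)) \<in> carrier_mat n n"
    by (intro minus_carrier_mat smult_carrier_mat pmat_carrier)
next
  show "1\<^sub>m n - x \<cdot>\<^sub>m pmat n (\<lambda>p. if p = Suc i then q p else q (swap_pos i p)) \<in> carrier_mat n n"
    by (intro minus_carrier_mat smult_carrier_mat pmat_carrier)
next
  show "i < n" using assms by simp
qed


definition dS :: "nat set \<Rightarrow> (nat \<Rightarrow> nat \<Rightarrow> real) \<Rightarrow> real" where
  "dS S A = (\<Sum>p\<in>{p. p permutes S}. of_int (sign p) * (\<Prod>a\<in>S. A a (p a)))"

definition fA :: "real \<Rightarrow> (nat \<Rightarrow> nat) \<Rightarrow> nat \<Rightarrow> nat \<Rightarrow> real" where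
  "fA x f a b = (if a = b then 1 else 0) - x * (if b = f a then 1 else 0)"

lemma dS_cong: "(\<And>a b. a \<in> S \<Longrightarrow> A a b = B a b) \<Longrightarrow> dS S A = dS S B"
  unfolding dS_def by (intro sum.cong refl arg_cong2[where f="(*)"] prod.cong) auto

lemma dS_leaf: assumes S: "finite S" and v: "v \<in> S" and col: "\<And>a. a \<in> S \<Longrightarrow> A a v = (if a = v then 1 else 0)"
  shows "dS S A = dS (S - {v}) A"
proof -
  let ?g = "\<lambda>p. of_int (sign p) * (\<Prod>a\<in>S. A a (p a))"
  have sub: "{p. p permutes S - {v}} \<subseteq> {p. p permutes S}"
    by (auto intro: permutes_subset)
  have zero: "?g p = 0" if p: "p \<in> {p. p permutes S} - {p. p permutes S - {v}}" for p
  proof -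
    have pS: "p permutes S" using p by auto
    have "p v \<noteq> v"
    proof
      assume "p v = v"
      then have "p permutes S - {v}" using pS by (intro permutes_superset[OF pS]) auto
      then show False using p by auto
    qed
    obtain a where a: "a \<in> S" "p a = v" using permutes_image[OF pS] v by (metis imageE)
    then have "a \<noteq> v" using \<open>p v \<noteq> v\<close> by auto
    then have "A a (p a) = 0" using col a by auto
    then have "(\<Prod>a\<in>S. A a (p a)) = 0" using a S by (intro prod_zero) auto
    then show ?thesis by simp
  qed
  have "dS S A = (\<Sum>p\<in>{p. p permutes S - {v}}. ?g p)"
    unfolding dS_def using S zero sub by (intro sum.mono_neutral_right) (auto simp: finite_permutations)
  also have "\<dots> = dS (S - {v}) A"
    unfolding dS_def
  proof (intro sum.cong refl)
    fix p assume "p \<in> {p. p permutes S - {v}}"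
    then have pS: "p permutes S - {v}" by simp
    then have "p v = v" by (simp add: permutes_not_in)
    then have "(\<Prod>a\<in>S. A a (p a)) = A v v * (\<Prod>a\<in>S - {v}. A a (p a))"
      using S v by (simp add: prod.remove)
    then show "?g p = of_int (sign p) * (\<Prod>a\<in>S - {v}. A a (p a))" using col v by simp
  qed
  finally show ?thesis .
qed

lemma sign_cycle: "distinct cs \<Longrightarrow> cs \<noteq> [] \<Longrightarrow> sign (cycle_of_list cs) = (-1) ^ (length cs - 1)"
proof (induction cs rule: cycle_of_list.induct)
  case (1 i j cs)
  then have "i \<noteq> j" by auto
  have "sign (cycle_of_list (i # j # cs)) = sign (Transposition.transpose i j) * sign (cycle_of_list (j # cs))"
    by (simp add: sign_compose permutation_swap_id permutation_of_cycle)
  also have "\<dots> = - ((-1) ^ (length (j # cs) - 1))" using 1 \<open>i \<noteq> j\<close> by (simp add: sign_swap_id)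
  also have "\<dots> = (-1) ^ (length (i # j # cs) - 1)" by simp
  finally show ?case .
next
  case ("2_2" v) then show ?case by simp
qed simp

lemma funpow_in: "(\<And>a. a \<in> S \<Longrightarrow> f a \<in> S) \<Longrightarrow> s \<in> S \<Longrightarrow> (f ^^ k) s \<in> S"
  by (induction k) auto

lemma funpow_id_mult: "p ^^ N = id \<Longrightarrow> (p ^^ (N * l)) a = a"
  by (simp add: funpow_mult[symmetric] mult.commute)

lemma sigma_cases:
  assumes sS: "\<sigma> permutes S" and pS: "p permutes S"
    and alt: "\<And>a. a \<in> S \<Longrightarrow> \<sigma> a = a \<or> \<sigma> a = p a"
    and nofix: "\<And>a. a \<in> S \<Longrightarrow> p a \<noteq> a"
    and trans: "\<And>d s. d \<in> S \<Longrightarrow> s \<in> S \<Longrightarrow> \<exists>j. (p ^^ j) d = s"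
  shows "\<sigma> = id \<or> \<sigma> = p"
proof (cases "\<sigma> = id")
  case False
  then obtain d where "\<sigma> d \<noteq> d" by (auto simp: fun_eq_iff)
  then have d: "d \<in> S" using permutes_not_in[OF sS] by blast
  then have sd: "\<sigma> d = p d" using alt \<open>\<sigma> d \<noteq> d\<close> by blast
  have iter: "\<sigma> ((p ^^ j) d) = p ((p ^^ j) d)" for j
  proof (induction j)
    case 0 then show ?case using sd by simp
  next
    case (Suc j)
    let ?y = "(p ^^ j) d" and ?z = "(p ^^ Suc j) d"
    have yS: "?y \<in> S" using d by (intro funpow_in) (auto simp: permutes_in_image[OF pS])
    have zS: "?z \<in> S" using d by (intro funpow_in) (auto simp: permutes_in_image[OF pS])
    have "\<sigma> ?z \<noteq> ?z"
    proof
      assume "\<sigma> ?z = ?z"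
      moreover have "\<sigma> ?y = ?z" using Suc by simp
      ultimately have "?y = ?z" using permutes_inj[OF sS] by (metis injD)
      then show False using nofix[OF yS] by simp
    qed
    then show ?case using alt[OF zS] by blast
  qed
  have "\<sigma> s = p s" for s
  proof (cases "s \<in> S")
    case True
    then obtain j where "(p ^^ j) d = s" using trans d by blast
    then show ?thesis using iter by blast
  next
    case False then show ?thesis using permutes_not_in[OF sS] permutes_not_in[OF pS] by simp
  qed
  then show ?thesis by auto
qed simp

lemma dS_cycle:
  assumes S: "finite S" and pS: "p permutes S" and c: "c \<in> S"
    and reach: "\<And>s. s \<in> S \<Longrightarrow> \<exists>k. (p ^^ k) s = c"
    and m: "0 < m" "(p ^^ m) c = c" and mmin: "\<And>j. 0 < j \<Longrightarrow> j < m \<Longrightarrow> (p ^^ j) c \<noteq> c"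
  shows "dS S (fA x p) = 1 - x ^ m"
proof -
  have perm: "permutation p" using S pS permutation_permutes by blast
  obtain N where N: "p ^^ N = id" "N > 0" using permutation_is_nilpotent[OF perm] by blast
  have inS: "(p ^^ j) a \<in> S" if "a \<in> S" for j a
    using that by (intro funpow_in) (auto simp: permutes_in_image[OF pS])
  have orbit: "\<exists>j. (p ^^ j) c = s" if s: "s \<in> S" for s
  proof -
    obtain k where k: "(p ^^ k) s = c" using reach s by blast
    have "(p ^^ (N * k - k)) c = (p ^^ (N * k - k)) ((p ^^ k) s)" using k by simp
    also have "\<dots> = (p ^^ (N * k - k + k)) s" by (simp add: funpow_add)
    also have "N * k - k + k = N * k" using N(2) by (cases N) auto
    also have "(p ^^ (N * k)) s = s" using funpow_id_mult[OF N(1)] .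
    finally show ?thesis by blast
  qed
  have trans: "\<exists>j. (p ^^ j) d = s" if dS: "d \<in> S" and sS: "s \<in> S" for d s
  proof -
    obtain l where l: "(p ^^ l) c = d" using orbit[OF dS] by blast
    obtain i where i: "(p ^^ i) c = s" using orbit[OF sS] by blast
    have "(p ^^ (i + (N - 1) * l)) d = (p ^^ (i + (N - 1) * l + l)) c"
      using l by (simp add: funpow_add)
    also have "i + (N - 1) * l + l = i + N * l" using N(2) by (cases N) auto
    also have "(p ^^ (i + N * l)) c = (p ^^ i) ((p ^^ (N * l)) c)" by (simp add: funpow_add)
    also have "\<dots> = s" using funpow_id_mult[OF N(1)] i by simp
    finally show ?thesis by blast
  qed
  show ?thesis
  proof (cases "m = 1")
    case True
    then have pc: "p c = c" using m by simp
    have "(p ^^ j) c = c" for j by (induction j) (simp_all add: pc)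
    then have "S = {c}" using orbit c by blast
    then have "dS S (fA x p) = fA x p c c"
      by (simp add: dS_def)
    then show ?thesis using pc True by (simp add: fA_def)
  next
    case False
    then have m2: "m \<ge> 2" using m by simp
    have pc: "p c \<noteq> c" using mmin[of 1] m2 by simp
    have nofix: "p a \<noteq> a" if a: "a \<in> S" for a
    proof
      assume pa: "p a = a"
      obtain j where j: "(p ^^ j) c = a" using orbit a by blast
      have "(p ^^ j) (p c) = (p ^^ j) c" using pa j by (metis funpow_swap1)
      then have "p c = c" using inj_fn[OF permutes_inj[OF pS]] by (metis injD)
      then show False using pc by simp
    qed
    have lp: "least_power p c = m"
      unfolding least_power_def
    proof (rule Least_equality)
      show "(p ^^ m) c = c \<and> 0 < m" using m by simp
      show "m \<le> y" if "(p ^^ y) c = c \<and> 0 < y" for y using mmin[of y] that by force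
    qed
    define cs where "cs = support p c"
    have dist: "distinct cs" unfolding cs_def by (rule cycle_of_permutation[OF perm])
    have setcs: "set cs = S"
    proof
      show "set cs \<subseteq> S" unfolding cs_def support_set[OF perm] using inS c by auto
      show "S \<subseteq> set cs" unfolding cs_def support_set[OF perm] using orbit by blast
    qed
    have lencs: "length cs = m" unfolding cs_def lp by simp
    have cardS: "card S = m" using distinct_card[OF dist] setcs lencs by simp
    have pcyc: "p = cycle_of_list cs"
    proof
      fix b show "p b = cycle_of_list cs b"
      proof (cases "b \<in> set cs")
        case True then show ?thesis unfolding cs_def by (rule cycle_restrict[OF perm])
      next
        case False then show ?thesis using setcs permutes_not_in[OF pS] id_outside_supp by metis
      qed
    qed
    have sgn: "sign p = (-1) ^ (m - 1)"
      using sign_cycle[OF dist] lencs m pcyc by (cases cs) auto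
    let ?g = "\<lambda>\<sigma>. of_int (sign \<sigma>) * (\<Prod>a\<in>S. fA x p a (\<sigma> a))"
    have zero: "?g \<sigma> = 0" if "\<sigma> \<in> {\<sigma>. \<sigma> permutes S} - {id, p}" for \<sigma>
    proof -
      have sS: "\<sigma> permutes S" and ne: "\<sigma> \<noteq> id" "\<sigma> \<noteq> p" using that by auto
      have "\<not> (\<forall>a\<in>S. \<sigma> a = a \<or> \<sigma> a = p a)"
        using sigma_cases[OF sS pS _ nofix trans] ne by blast
      then obtain a where a: "a \<in> S" "\<sigma> a \<noteq> a" "\<sigma> a \<noteq> p a" by blast
      then have "fA x p a (\<sigma> a) = 0" by (simp add: fA_def)
      then have "(\<Prod>a\<in>S. fA x p a (\<sigma> a)) = 0" using a S by (intro prod_zero) auto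
      then show ?thesis by simp
    qed
    have "dS S (fA x p) = (\<Sum>\<sigma>\<in>{id, p}. ?g \<sigma>)"
      unfolding dS_def using S zero pS by (intro sum.mono_neutral_right) (auto simp: finite_permutations)
    also have "\<dots> = ?g id + ?g p"
      using pc by (subst sum.insert) (auto simp: fun_eq_iff intro: exI[of _ c])
    also have "?g id = 1"
    proof -
      have "(\<Prod>a\<in>S. fA x p a (id a)) = (\<Prod>a\<in>S. 1)"
        using nofix by (intro prod.cong) (auto simp: fA_def dest: sym)
      then show ?thesis by simp
    qed
    also have "?g p = (-1) ^ (m - 1) * (- x) ^ m"
    proof -
      have "(\<Prod>a\<in>S. fA x p a (p a)) = (\<Prod>a\<in>S. - x)"
        using nofix by (intro prod.cong) (auto simp: fA_def dest: sym)
      then show ?thesis using cardS sgn by simp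
    qed
    also have "1 + (-1) ^ (m - 1) * (- x) ^ m = 1 - x ^ m"
    proof -
      obtain m' where m': "m = Suc m'" using m by (cases m) auto
      have "(-1) ^ m' * (- x) ^ Suc m' = - ((-1) ^ m' * (-1) ^ m') * x ^ Suc m'"
        by (simp add: power_minus[of x] algebra_simps)
      also have "(-1::real) ^ m' * (-1) ^ m' = 1" by (simp add: power_add[symmetric])
      finally show ?thesis using m' by simp
    qed
    finally show ?thesis .
  qed
qed

lemma dS_unicycle:
  assumes "finite S" "\<And>a. a \<in> S \<Longrightarrow> f a \<in> S" "c \<in> S"
    "\<And>s. s \<in> S \<Longrightarrow> \<exists>k. (f ^^ k) s = c"
    "0 < m" "(f ^^ m) c = c" "\<And>j. 0 < j \<Longrightarrow> j < m \<Longrightarrow> (f ^^ j) c \<noteq> c"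
  shows "dS S (fA x f) = 1 - x ^ m"
  using assms
proof (induction "card S" arbitrary: S rule: less_induct)
  case less
  note S = less.prems(1) and fS = less.prems(2) and c = less.prems(3) and reach = less.prems(4)
  show ?case
  proof (cases "\<exists>v\<in>S. v \<notin> f ` S")
    case True
    then obtain v where v: "v \<in> S" "v \<notin> f ` S" by blast
    have col: "fA x f a v = (if a = v then 1 else 0)" if "a \<in> S" for a
      using v that by (auto simp: fA_def)
    have "(f ^^ m) c = f ((f ^^ (m - 1)) c)" using less.prems(5)
      by (metis Suc_pred' comp_apply funpow.simps(2))
    moreover have "(f ^^ (m - 1)) c \<in> S" using fS c by (intro funpow_in)
    ultimately have "c \<in> f ` S" using less.prems(6) by (metis image_eqI)
    then have cv: "c \<noteq> v" using v by auto
    have "dS S (fA x f) = dS (S - {v}) (fA x f)" by (rule dS_leaf[of S v "fA x f", OF S v(1) col])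
    also have "\<dots> = 1 - x ^ m"
    proof (rule less.hyps)
      show "card (S - {v}) < card S" using S v by (meson card_Diff1_less)
      show "finite (S - {v})" using S by simp
      show "f a \<in> S - {v}" if "a \<in> S - {v}" for a using fS that v by auto
      show "c \<in> S - {v}" using c cv by simp
      show "\<exists>k. (f ^^ k) s = c" if "s \<in> S - {v}" for s using reach that by auto
    qed (use less.prems in auto)
    finally show ?thesis .
  next
    case False
    then have sub: "S \<subseteq> f ` S" by blast
    have inj: "inj_on f S" by (rule finite_surj_inj[OF S sub])
    have img: "f ` S = S" using sub fS by auto
    define p where "p = (\<lambda>a. if a \<in> S then f a else a)"
    have pS: "p permutes S"
    proof (rule bij_imp_permutes)
      have "inj_on p S" using inj unfolding p_def inj_on_def by auto
      moreover have "p ` S = S" using img unfolding p_def by auto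
      ultimately show "bij_betw p S S" by (simp add: bij_betw_def)
      show "p a = a" if "a \<notin> S" for a using that by (simp add: p_def)
    qed
    have pf: "(p ^^ k) s = (f ^^ k) s" if "s \<in> S" for k s
    proof (induction k)
      case (Suc k)
      have "(f ^^ k) s \<in> S" using fS that by (intro funpow_in)
      then show ?case using Suc by (simp add: p_def)
    qed simp
    have "dS S (fA x f) = dS S (fA x p)"
      by (rule dS_cong) (simp add: fA_def p_def)
    also have "\<dots> = 1 - x ^ m"
    proof (rule dS_cycle[OF S pS c])
      show "\<exists>k. (p ^^ k) s = c" if "s \<in> S" for s using reach[OF that] pf[OF that] by metis
      show "(p ^^ m) c = c" using pf[OF c] less.prems(6) by simp
      show "(p ^^ j) c \<noteq> c" if "0 < j" "j < m" for j using pf[OF c] less.prems(7)[OF that] by simp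
    qed (use less.prems in auto)
    finally show ?thesis .
  qed
qed


lemma follow_out: "okw n ws \<Longrightarrow> p = 0 \<or> n < p \<Longrightarrow> follow ws p = p"
proof (induction ws)
  case (Cons l ws)
  then have "swap_pos (fst l) p = p" by (auto simp: okw_def swap_pos_def)
  then show ?case using Cons by (simp add: okw_def)
qed simp

lemma follow_permutes: assumes "okw n ws" shows "follow ws permutes {1..n}"
proof (rule bij_imp_permutes)
  show "bij_betw (follow ws) {1..n} {1..n}"
  proof (rule bij_betw_byWitness[where f' = "follow (rev ws)"])
    show "\<forall>a\<in>{1..n}. follow (rev ws) (follow ws a) = a" by (simp add: follow_rev)
    show "\<forall>a\<in>{1..n}. follow ws (follow (rev ws) a) = a" by (simp add: follow_rev')
    show "follow ws ` {1..n} \<subseteq> {1..n}" using follow_range[OF assms] by auto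
    show "follow (rev ws) ` {1..n} \<subseteq> {1..n}" using follow_range[OF okw_rev[OF assms]] by auto
  qed
  show "follow ws p = p" if "p \<notin> {1..n}" for p
    using that by (intro follow_out[OF assms]) auto
qed

lemma okw_braid: "braid_word n w \<Longrightarrow> okw n w"
  by (auto simp: braid_word_def okw_def)

lemma smoothed_permutes: "okw n w \<Longrightarrow> smoothed_turn w r permutes {1..n}"
proof -
  assume a: "okw n w"
  have "smoothed_turn w r = follow (take r w) \<circ> follow (drop (Suc r) w)"
    by (simp add: smoothed_turn_def fun_eq_iff)
  then show ?thesis
    using permutes_compose[OF follow_permutes[OF okw_drop[OF a]] follow_permutes[OF okw_take[OF a]]] by simp
qed

lemma follow_split: "r < length w \<Longrightarrow> follow w p = follow (drop (Suc r) w) (swap_pos (fst (w ! r)) (follow (take r w) p))"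
proof -
  assume r: "r < length w"
  have "w = take r w @ (w ! r) # drop (Suc r) w" using r by (simp add: id_take_nth_drop)
  then have "follow w p = follow (take r w @ (w ! r) # drop (Suc r) w) p" by simp
  then show ?thesis by (simp add: follow_append)
qed

lemma pi_conj: assumes "r < length w"
  shows "(\<lambda>p. smoothed_turn w r (swap_pos (fst (w ! r)) p)) =
     (\<lambda>p. follow (take r w) (follow w (follow (rev (take r w)) p)))"
  using assms by (simp add: fun_eq_iff follow_split follow_rev' smoothed_turn_def)

lemma conj_funpow: "(\<And>y. Ti (T y) = y) \<Longrightarrow> (\<And>y. T (Ti y) = y) \<Longrightarrow>
   ((\<lambda>p. T (g (Ti p))) ^^ k) = (\<lambda>p. T ((g ^^ k) (Ti p)))"
  by (induction k) (simp_all add: fun_eq_iff)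

lemma pi_trans: assumes w: "okw n w" and r: "r < length w" and knot: "is_knot_closure n w"
    and s: "s \<in> {1..n}" and c: "c \<in> {1..n}"
  shows "\<exists>k. ((\<lambda>p. smoothed_turn w r (swap_pos (fst (w ! r)) p)) ^^ k) s = c"
proof -
  let ?T = "follow (take r w)" and ?Ti = "follow (rev (take r w))"
  have "?Ti s \<in> {1..n}" "?Ti c \<in> {1..n}"
    using follow_range[OF okw_rev[OF okw_take[OF w]]] s c by auto
  then obtain k where k: "(follow w ^^ k) (?Ti s) = ?Ti c"
    using knot unfolding is_knot_closure_def by blast
  have "((\<lambda>p. smoothed_turn w r (swap_pos (fst (w ! r)) p)) ^^ k) s = ?T ((follow w ^^ k) (?Ti s))"
    unfolding pi_conj[OF r] by (subst conj_funpow) (simp_all add: follow_rev follow_rev')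
  also have "\<dots> = c" using k by (simp add: follow_rev')
  finally show ?thesis by blast
qed

lemma pi_permutes: assumes w: "okw n w" and r: "r < length w"
  shows "(\<lambda>p. smoothed_turn w r (swap_pos (fst (w ! r)) p)) permutes {1..n}"
proof -
  have "(\<lambda>p. follow (take r w) (follow w (follow (rev (take r w)) p))) =
        follow (take r w) \<circ> (follow w \<circ> follow (rev (take r w)))" by (simp add: fun_eq_iff)
  moreover have "follow (take r w) \<circ> (follow w \<circ> follow (rev (take r w))) permutes {1..n}"
    by (intro permutes_compose follow_permutes okw_rev okw_take w)
  ultimately show ?thesis unfolding pi_conj[OF r] by simp
qed

lemma cycle_card:
  assumes S: "finite S" and pS: "p permutes S" and c: "c \<in> S"
    and reach: "\<And>s. s \<in> S \<Longrightarrow> \<exists>k. (p ^^ k) s = c"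
  shows "least_power p c = card S"
proof -
  have perm: "permutation p" using S pS permutation_permutes by blast
  obtain N where N: "p ^^ N = id" "N > 0" using permutation_is_nilpotent[OF perm] by blast
  have inS: "(p ^^ j) a \<in> S" if "a \<in> S" for j a
    using that by (intro funpow_in) (auto simp: permutes_in_image[OF pS])
  have orbit: "\<exists>j. (p ^^ j) c = s" if s: "s \<in> S" for s
  proof -
    obtain k where k: "(p ^^ k) s = c" using reach s by blast
    have "(p ^^ (N * k - k)) c = (p ^^ (N * k - k)) ((p ^^ k) s)" using k by simp
    also have "\<dots> = (p ^^ (N * k - k + k)) s" by (simp add: funpow_add)
    also have "N * k - k + k = N * k" using N(2) by (cases N) auto
    also have "(p ^^ (N * k)) s = s" using funpow_id_mult[OF N(1)] .
    finally show ?thesis by blast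
  qed
  have dist: "distinct (support p c)" by (rule cycle_of_permutation[OF perm])
  have setcs: "set (support p c) = S"
  proof
    show "set (support p c) \<subseteq> S" unfolding support_set[OF perm] using inS c by auto
    show "S \<subseteq> set (support p c)" unfolding support_set[OF perm] using orbit by blast
  qed
  show ?thesis using distinct_card[OF dist] setcs by simp
qed

lemma det_pmat_dS: assumes g: "\<And>p. 1 \<le> p \<Longrightarrow> p \<le> n \<Longrightarrow> 1 \<le> g p \<and> g p \<le> n"
  shows "det (1\<^sub>m n - x \<cdot>\<^sub>m pmat n g) = dS {0..<n} (fA x (\<lambda>a. g (Suc a) - 1))"
proof -
  have C: "1\<^sub>m n - x \<cdot>\<^sub>m pmat n g \<in> carrier_mat n n"
    by (intro minus_carrier_mat smult_carrier_mat pmat_carrier)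
  have E: "(1\<^sub>m n - x \<cdot>\<^sub>m pmat n g) $$ (a, b) = fA x (\<lambda>a. g (Suc a) - 1) a b" if "a < n" "b < n" for a b
  proof -
    have "1 \<le> g (Suc a)" using g[of "Suc a"] that by auto
    then have "(Suc b = g (Suc a)) = (b = g (Suc a) - 1)" by auto
    then show ?thesis using IXP_entry[OF that, of x g] by (simp add: fA_def)
  qed
  show ?thesis
    unfolding det_def'[OF C] dS_def
  proof (intro sum.cong refl arg_cong2[where f="(*)"] prod.cong)
    fix p a assume "p \<in> {p. p permutes {0..<n}}" "a \<in> {0..<n}"
    then have "a < n" "p a < n" by (auto simp: permutes_in_image)
    then show "(1\<^sub>m n - x \<cdot>\<^sub>m pmat n g) $$ (a, p a) = fA x (\<lambda>a. g (Suc a) - 1) a (p a)" by (rule E)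
  qed
qed

lemma shift_funpow: assumes g: "\<And>p. 1 \<le> p \<Longrightarrow> p \<le> n \<Longrightarrow> 1 \<le> g p \<and> g p \<le> n" and a: "a < n"
  shows "((\<lambda>a. g (Suc a) - 1) ^^ k) a = (g ^^ k) (Suc a) - 1 \<and> 1 \<le> (g ^^ k) (Suc a) \<and> (g ^^ k) (Suc a) \<le> n"
proof (induction k)
  case 0 then show ?case using a by simp
next
  case (Suc k)
  then have "Suc ((g ^^ k) (Suc a) - 1) = (g ^^ k) (Suc a)" by simp
  then show ?case using Suc g[of "(g ^^ k) (Suc a)"] by simp
qed

lemma det_unicycle: fixes x :: real
  assumes g: "\<And>p. 1 \<le> p \<Longrightarrow> p \<le> n \<Longrightarrow> 1 \<le> g p \<and> g p \<le> n"
    and c: "1 \<le> c" "c \<le> n"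
    and reach: "\<And>s. 1 \<le> s \<Longrightarrow> s \<le> n \<Longrightarrow> \<exists>k. (g ^^ k) s = c"
    and m: "0 < m" "(g ^^ m) c = c" and mmin: "\<And>j. 0 < j \<Longrightarrow> j < m \<Longrightarrow> (g ^^ j) c \<noteq> c"
  shows "det (1\<^sub>m n - x \<cdot>\<^sub>m pmat n g) = 1 - x ^ m"
proof -
  let ?f = "\<lambda>a. g (Suc a) - 1"
  have c0: "c - 1 < n" "Suc (c - 1) = c" using c by auto
  have "dS {0..<n} (fA x ?f) = 1 - x ^ m"
  proof (rule dS_unicycle)
    show "?f a \<in> {0..<n}" if "a \<in> {0..<n}" for a using g[of "Suc a"] that by auto
    show "c - 1 \<in> {0..<n}" using c0 by simp
    show "\<exists>k. (?f ^^ k) s = c - 1" if s: "s \<in> {0..<n}" for s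
    proof -
      obtain k where "(g ^^ k) (Suc s) = c" using reach[of "Suc s"] s by auto
      then show ?thesis using shift_funpow[where g=g and n=n and a=s and k=k, OF g] s by auto
    qed
    show "(?f ^^ m) (c - 1) = c - 1" using shift_funpow[where g=g and n=n and a="c - 1" and k=m, OF g c0(1)] c0 m by simp
    show "(?f ^^ j) (c - 1) \<noteq> c - 1" if "0 < j" "j < m" for j
      using shift_funpow[where g=g and n=n and a="c - 1" and k=j, OF g c0(1)] c0 mmin[OF that] by auto
  qed (use m in auto)
  then show ?thesis using det_pmat_dS[OF g] by simp
qed


lemma crossing_facts:
  fixes x :: real
  assumes w: "okw n w" and knot: "is_knot_closure n w" and r: "r < length w"
    and i: "fst (w ! r) = i" and a: "a = (if snd (w ! r) = 1 then i else Suc i)"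
  shows "0 < m_turns w r \<and> m_turns w r < n \<and>
    det (1\<^sub>m n - x \<cdot>\<^sub>m pmat n (\<lambda>p. if p = a then smoothed_turn w r p else smoothed_turn w r (swap_pos i p))) = 1 - x ^ m_turns w r \<and>
    det (1\<^sub>m n - x \<cdot>\<^sub>m pmat n (\<lambda>p. smoothed_turn w r (swap_pos i p))) = 1 - x ^ n"
proof -
  define q where "q = smoothed_turn w r"
  define \<pi> where "\<pi> = (\<lambda>p. q (swap_pos i p))"
  define F where "F = (\<lambda>p. if p = a then q p else q (swap_pos i p))"
  define b where "b = (if snd (w ! r) = 1 then Suc i else i)"
  have i1: "1 \<le> i" "i < n" using okw_nth[OF w r] i by auto
  have ab: "a \<noteq> b" "a \<in> {1..n}" "b \<in> {1..n}" "{a, b} = {i, Suc i}" using i1 by (auto simp: a b_def)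
  have qS: "q permutes {1..n}" unfolding q_def by (rule smoothed_permutes[OF w])
  have piS: "\<pi> permutes {1..n}" unfolding \<pi>_def q_def using pi_permutes[OF w r] i by simp
  have pitrans: "\<exists>k. (\<pi> ^^ k) s = c" if "s \<in> {1..n}" "c \<in> {1..n}" for s c
    unfolding \<pi>_def q_def using pi_trans[OF w r knot that] i by simp
  have qperm: "permutation q" using qS permutation_permutes by blast
  have piperm: "permutation \<pi>" using piS permutation_permutes by blast
  have qin: "q p \<in> {1..n}" if "p \<in> {1..n}" for p using permutes_in_image[OF qS, of p] that by blast
  have swap_other: "swap_pos i p = p" if "p \<noteq> a" "p \<noteq> b" for p
    using that ab(4) by (auto simp: swap_pos_def)
  have Fq: "F p = q p" if "p \<noteq> b" for p
    using that swap_other[of p] by (auto simp: F_def)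
  have Fpi: "F p = \<pi> p" if "p \<noteq> a" for p using that by (simp add: F_def \<pi>_def)
  have pib: "\<pi> b = q a" using ab(4) ab(1) by (auto simp: \<pi>_def swap_pos_def doubleton_eq_iff)
  have piq: "\<pi> p = q p" if "p \<noteq> a" "p \<noteq> b" for p using swap_other[OF that] by (simp add: \<pi>_def)
  have avoid: "(q ^^ j) a \<noteq> b" for j
  proof
    assume "(q ^^ j) a = b"
    define j0 where "j0 = (LEAST j. (q ^^ j) a = b)"
    have j0: "(q ^^ j0) a = b" unfolding j0_def by (rule LeastI) fact
    have j0min: "(q ^^ s) a \<noteq> b" if "s < j0" for s using not_less_Least[OF that[unfolded j0_def]] .
    have j0pos: "0 < j0" using j0 ab(1) by (cases j0) auto
    have nota: "(q ^^ s) a \<noteq> a" if "1 \<le> s" "s < j0" for s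
    proof
      assume qa: "(q ^^ s) a = a"
      have "(q ^^ (j0 - s)) a = (q ^^ (j0 - s)) ((q ^^ s) a)" using qa by simp
      also have "\<dots> = (q ^^ j0) a" using that by (simp add: funpow_add[symmetric, THEN fun_cong, simplified])
      finally show False using j0min[of "j0 - s"] j0 that by simp
    qed
    define C where "C = {(q ^^ s) a | s. 1 \<le> s \<and> s \<le> j0}"
    have closed: "\<pi> y \<in> C" if yC: "y \<in> C" for y
    proof -
      obtain s where s: "y = (q ^^ s) a" "1 \<le> s" "s \<le> j0" using yC by (auto simp: C_def)
      show ?thesis
      proof (cases "s = j0")
        case True
        then have "\<pi> y = (q ^^ 1) a" using s j0 pib by simp
        then show ?thesis using j0pos unfolding C_def by (intro CollectI exI[of _ 1]) simp
      next
        case False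
        then have "s < j0" using s by simp
        then have "\<pi> y = (q ^^ Suc s) a" using piq[of y] s j0min nota by simp
        then show ?thesis using \<open>s < j0\<close> unfolding C_def by (intro CollectI exI[of _ "Suc s"]) simp
      qed
    qed
    have bC: "b \<in> C" using j0 j0pos by (auto simp: C_def intro!: exI[of _ j0])
    have aC: "a \<notin> C"
    proof
      assume "a \<in> C"
      then obtain s where s: "a = (q ^^ s) a" "1 \<le> s" "s \<le> j0" by (auto simp: C_def)
      show False using s nota[of s] j0 ab(1) by (cases "s = j0") auto
    qed
    obtain k where "(\<pi> ^^ k) b = a" using pitrans ab by blast
    moreover have "(\<pi> ^^ k) b \<in> C" by (rule funpow_in[OF closed bC])
    ultimately show False using aC by simp
  qed
  have Fa: "(F ^^ j) a = (q ^^ j) a" for j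
    by (induction j) (simp_all add: Fq avoid)
  have asc: "ascending_pos w r = a" using i by (simp add: ascending_pos_def a)
  have mt: "m_turns w r = least_power q a"
    unfolding m_turns_def least_power_def asc q_def by (simp add: conj_commute)
  let ?m = "m_turns w r"
  have m0: "0 < ?m" "(q ^^ ?m) a = a" using least_power_of_permutation[OF qperm, of a] mt by auto
  have mmin: "(q ^^ j) a \<noteq> a" if "0 < j" "j < ?m" for j
    using least_power_le[where f=q and n=j and x=a] that mt by auto
  have mlt: "?m < n"
  proof -
    have dist: "distinct (support q a)" by (rule cycle_of_permutation[OF qperm])
    have "set (support q a) \<subseteq> {1..n} - {b}"
    proof
      fix y assume "y \<in> set (support q a)"
      then obtain j where "y = (q ^^ j) a" by auto
      moreover have "(q ^^ j) a \<in> {1..n}" using ab(2) qin by (intro funpow_in)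
      ultimately show "y \<in> {1..n} - {b}" using avoid by auto
    qed
    then have "card (set (support q a)) \<le> card ({1..n} - {b})" by (intro card_mono) auto
    also have "\<dots> = n - 1" using ab(3) by simp
    finally have "least_power q a \<le> n - 1" using distinct_card[OF dist] by simp
    then show ?thesis using mt i1 by simp
  qed
  have Frange: "1 \<le> F p \<and> F p \<le> n" if "1 \<le> p" "p \<le> n" for p
  proof -
    have "swap_pos i p \<in> {1..n}" using swap_pos_range[OF i1 that] by simp
    then show ?thesis using qin that by (auto simp: F_def)
  qed
  have Freach: "\<exists>k. (F ^^ k) s = a" if s: "1 \<le> s" "s \<le> n" for s
  proof -
    obtain k where "(\<pi> ^^ k) s = a" using pitrans[of s a] s ab by auto
    define k0 where "k0 = (LEAST k. (\<pi> ^^ k) s = a)"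
    have k0: "(\<pi> ^^ k0) s = a" unfolding k0_def by (rule LeastI) fact
    have "j \<le> k0 \<Longrightarrow> (F ^^ j) s = (\<pi> ^^ j) s" for j
    proof (induction j)
      case (Suc j)
      then have "(\<pi> ^^ j) s \<noteq> a" using not_less_Least[of j "\<lambda>k. (\<pi> ^^ k) s = a"] by (simp add: k0_def)
      then show ?case using Suc by (simp add: Fpi)
    qed simp
    then show ?thesis using k0 by auto
  qed
  have detF: "det (1\<^sub>m n - x \<cdot>\<^sub>m pmat n F) = 1 - x ^ ?m"
    by (rule det_unicycle[OF Frange _ _ Freach m0(1)]) (use ab(2) Fa m0 mmin in auto)
  have lpi: "least_power \<pi> 1 = n"
    using cycle_card[OF _ piS _ pitrans] i1 by simp
  have pirange: "1 \<le> \<pi> p \<and> \<pi> p \<le> n" if "1 \<le> p" "p \<le> n" for p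
    using permutes_in_image[OF piS, of p] that by auto
  have detpi: "det (1\<^sub>m n - x \<cdot>\<^sub>m pmat n \<pi>) = 1 - x ^ n"
  proof (rule det_unicycle[OF pirange])
    show "\<exists>k. (\<pi> ^^ k) s = 1" if "1 \<le> s" "s \<le> n" for s using pitrans[of s 1] that i1 by auto
    show "0 < n" "(\<pi> ^^ n) 1 = 1" using least_power_of_permutation[OF piperm, of 1] lpi by auto
    show "(\<pi> ^^ j) 1 \<noteq> 1" if "0 < j" "j < n" for j using least_power_le[where f=\<pi> and n=j and x=1] that lpi by auto
  qed (use i1 in auto)
  show ?thesis using m0 mlt detF detpi unfolding F_def \<pi>_def q_def by simp
qed


lemma crossing_du:
  assumes w: "okw n w" and knot: "is_knot_closure n w" and r: "r < length w"
    and e: "snd (w ! r) = 1 \<or> snd (w ! r) = -1"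
  shows "du (det (1\<^sub>m n - cst x \<cdot>\<^sub>m Br n w r)) 0 = of_int (snd (w ! r)) * (x ^ m_turns w r - x ^ n)"
proof -
  obtain i e0 where l: "w ! r = (i, e0)" by (cases "w ! r")
  have i1: "1 \<le> i" "i < n" using okw_nth[OF w r] l by auto
  have "du (det (1\<^sub>m n - cst x \<cdot>\<^sub>m Br n w r)) 0 =
        du (det (1\<^sub>m n - cst x \<cdot>\<^sub>m (glet n (i, e0) T1 Ti1 * pmat n (smoothed_turn w r)))) 0"
    using det_Br[OF w r] l by simp
  also have "\<dots> = of_int e0 * (x ^ m_turns w r - x ^ n)"
  proof (cases "e0 = 1")
    case True
    have F: "0 < m_turns w r \<and> m_turns w r < n \<and>
      det (1\<^sub>m n - x \<cdot>\<^sub>m pmat n (\<lambda>p. if p = i then smoothed_turn w r p else smoothed_turn w r (swap_pos i p))) = 1 - x ^ m_turns w r \<and>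
      det (1\<^sub>m n - x \<cdot>\<^sub>m pmat n (\<lambda>p. smoothed_turn w r (swap_pos i p))) = 1 - x ^ n"
      by (rule crossing_facts[OF w knot r]) (use l True in auto)
    show ?thesis using du_cross_pos[OF i1, of x "smoothed_turn w r"] F True by simp
  next
    case False
    then have em: "e0 = -1" using e l by auto
    have F: "0 < m_turns w r \<and> m_turns w r < n \<and>
      det (1\<^sub>m n - x \<cdot>\<^sub>m pmat n (\<lambda>p. if p = Suc i then smoothed_turn w r p else smoothed_turn w r (swap_pos i p))) = 1 - x ^ m_turns w r \<and>
      det (1\<^sub>m n - x \<cdot>\<^sub>m pmat n (\<lambda>p. smoothed_turn w r (swap_pos i p))) = 1 - x ^ n"
      by (rule crossing_facts[OF w knot r]) (use l False in auto)
    show ?thesis using du_cross_neg[OF i1 False, of x "smoothed_turn w r"] F em by simp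
  qed
  finally show ?thesis using l by simp
qed

lemma poly_zero_coeffs: fixes c :: "nat \<Rightarrow> real"
  assumes z: "\<And>x. (\<Sum>j=1..n. c j * x ^ j) = 0" and j: "j \<in> {1..n}"
  shows "c j = 0"
proof -
  define p where "p = (\<Sum>j\<in>{1..n}. monom (c j) j)"
  have "poly p x = 0" for x using z[of x] by (simp add: p_def poly_sum poly_monom)
  then have "p = 0" using poly_all_0_iff_0 by blast
  then have "coeff p j = 0" by simp
  moreover have "coeff p j = c j"
    unfolding p_def coeff_sum coeff_monom using j by (simp add: sum.delta)
  ultimately show ?thesis by simp
qed

lemma sqrt_powi: assumes x: "(x::real) > 0"
  shows "sqrt x powi (2 * int m - int n) = x ^ m * x powr (- real n / 2)"
proof -
  have "sqrt x powi (2 * int m - int n) = sqrt x powr (real_of_int (2 * int m - int n))"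
    using powr_real_of_int'[of "sqrt x" "2 * int m - int n"] x by simp
  also have "\<dots> = (x powr (1/2)) powr (real_of_int (2 * int m - int n))"
    using x by (simp add: powr_half_sqrt)
  also have "\<dots> = x powr (real m + (- real n / 2))"
    by (simp add: powr_powr algebra_simps)
  also have "\<dots> = x ^ m * x powr (- real n / 2)"
    using x by (simp only: powr_add powr_realpow[OF x])
  finally show ?thesis .
qed

lemma sum_delta_pow: fixes x :: real
  shows "m \<in> A \<Longrightarrow> finite A \<Longrightarrow> (\<Sum>j\<in>A. (if m = j then 1 else 0) * x ^ j) = x ^ m"
proof -
  assume "m \<in> A" "finite A"
  have "(\<Sum>j\<in>A. (if m = j then 1 else 0) * x ^ j) = (\<Sum>j\<in>A. if m = j then x ^ j else 0)"
    by (intro sum.cong) auto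
  then show ?thesis using \<open>m \<in> A\<close> \<open>finite A\<close> by simp
qed

lemma rif: "real_of_int (if c then 1 else 0) = (if c then 1 else 0)"
  by simp

theorem theorem1:
  fixes n :: nat and w :: "letter list"
  assumes "n \<ge> 1" and "braid_word n w" and "is_knot_closure n w"
  defines "D \<equiv> \<lambda>(x::real) (h::real). det (1\<^sub>m n - x \<cdot>\<^sub>m burau n w (exp h))"
  shows "(\<exists>f :: nat \<Rightarrow> int. \<forall>x. (D x has_real_derivative (\<Sum>j=1..n. of_int (f j) * x ^ j)) (at 0)) \<and>
         (\<forall>f :: nat \<Rightarrow> int.
            (\<forall>x. (D x has_real_derivative (\<Sum>j=1..n. of_int (f j) * x ^ j)) (at 0)) \<longrightarrow>
            (\<forall>x>0. fiedler n w (sqrt x) =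
                   (\<Sum>j=1..n-1. of_int (f j) * x ^ j) * x powr (- real n / 2)))"
proof -
  have w: "okw n w" using assms(2) by (rule okw_braid)
  have knot: "is_knot_closure n w" by fact
  have e: "snd (w ! r) = 1 \<or> snd (w ! r) = -1" if "r < length w" for r
    using assms(2) that nth_mem[OF that] unfolding braid_word_def by fastforce
  have mt: "0 < m_turns w r \<and> m_turns w r < n" if r: "r < length w" for r
  proof -
    obtain i where i: "fst (w ! r) = i" by simp
    show ?thesis using crossing_facts[OF w knot r i refl, where x=0] by blast
  qed
  define g where "g x = (\<Sum>r<length w. of_int (snd (w ! r)) * (x ^ m_turns w r - x ^ n))" for x :: real
  have deriv: "(D x has_real_derivative g x) (at 0)" for x
  proof -
    have "rel (\<lambda>h. det (1\<^sub>m n - x \<cdot>\<^sub>m burau n w (exp h)))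
      (det (1\<^sub>m n - cst x \<cdot>\<^sub>m prodm n (map (\<lambda>l. glet n l T1 Ti1) w)))" by (rule rel_D)
    then have "(D x has_real_derivative du (det (1\<^sub>m n - cst x \<cdot>\<^sub>m prodm n (map (\<lambda>l. glet n l T1 Ti1) w))) 0) (at 0)"
      unfolding rel_def D_def by simp
    also have "du (det (1\<^sub>m n - cst x \<cdot>\<^sub>m prodm n (map (\<lambda>l. glet n l T1 Ti1) w))) 0 = g x"
      unfolding deriv_decomp g_def by (intro sum.cong refl crossing_du[OF w knot] e) auto
    finally show ?thesis .
  qed
  define f0 :: "nat \<Rightarrow> int" where
    "f0 j = (\<Sum>r<length w. snd (w ! r) * ((if m_turns w r = j then 1 else 0) - (if j = n then 1 else 0)))" for j
  have geq: "(\<Sum>j=1..n. of_int (f0 j) * x ^ j) = g x" for x :: real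
  proof -
    have "(\<Sum>j=1..n. of_int (f0 j) * x ^ j) =
      (\<Sum>j=1..n. \<Sum>r<length w. of_int (snd (w ! r)) * (((if m_turns w r = j then 1 else 0) - (if j = n then 1 else 0)) * x ^ j))"
      by (simp add: f0_def sum_distrib_right sum_distrib_left algebra_simps rif sum_subtractf)
    also have "\<dots> = (\<Sum>r<length w. of_int (snd (w ! r)) *
        (\<Sum>j=1..n. ((if m_turns w r = j then 1 else 0) - (if j = n then 1 else 0)) * x ^ j))"
      by (subst sum.swap) (simp add: sum_distrib_left)
    also have "\<dots> = g x"
      unfolding g_def
    proof (intro sum.cong refl arg_cong2[where f="(*)"])
      fix r assume "r \<in> {..<length w}"
      then have m: "m_turns w r \<in> {1..n}" using mt by force
      have n: "n \<in> {1..n}" using assms(1) by simp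
      have "(\<Sum>j=1..n. ((if m_turns w r = j then 1 else 0) - (if j = n then 1 else 0)) * x ^ j) =
         (\<Sum>j=1..n. (if m_turns w r = j then 1 else 0) * x ^ j) - (\<Sum>j=1..n. (if n = j then 1 else 0) * x ^ j)"
        by (simp add: left_diff_distrib sum_subtractf eq_commute[of _ n])
      also have "\<dots> = x ^ m_turns w r - x ^ n"
        using sum_delta_pow[OF m] sum_delta_pow[OF n] by simp
      finally show "(\<Sum>j=1..n. ((if m_turns w r = j then 1 else 0) - (if j = n then 1 else 0)) * x ^ j) =
         x ^ m_turns w r - x ^ n" .
    qed
    finally show ?thesis .
  qed
  show ?thesis
  proof (intro conjI allI impI)
    show "\<exists>f :: nat \<Rightarrow> int. \<forall>x. (D x has_real_derivative (\<Sum>j=1..n. of_int (f j) * x ^ j)) (at 0)"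
      using deriv geq by (intro exI[of _ f0]) simp
  next
    fix f :: "nat \<Rightarrow> int" and x :: real
    assume hf: "\<forall>x. (D x has_real_derivative (\<Sum>j=1..n. of_int (f j) * x ^ j)) (at 0)"
    assume x: "0 < x"
    have same: "(\<Sum>j=1..n. of_int (f j) * y ^ j) = (\<Sum>j=1..n. of_int (f0 j) * y ^ j)" for y :: real
      using DERIV_unique[OF spec[OF hf, of y] deriv[of y]] geq[of y] by simp
    have feq: "f j = f0 j" if j: "j \<in> {1..n}" for j
    proof -
      have "real_of_int (f j) - of_int (f0 j) = 0"
      proof (rule poly_zero_coeffs[OF _ j])
        fix y :: real
        show "(\<Sum>j=1..n. (real_of_int (f j) - of_int (f0 j)) * y ^ j) = 0"
          using same[of y] by (simp add: left_diff_distrib sum_subtractf)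
      qed
      then show ?thesis by simp
    qed
    have "(\<Sum>j=1..n-1. of_int (f j) * x ^ j) = (\<Sum>j=1..n-1. of_int (f0 j) * x ^ j)"
      using feq by (intro sum.cong refl) auto
    also have "\<dots> = (\<Sum>j=1..n-1. \<Sum>r<length w. of_int (snd (w ! r)) * ((if m_turns w r = j then 1 else 0) * x ^ j))"
      by (intro sum.cong refl) (auto simp: f0_def sum_distrib_right rif mult.assoc)
    also have "\<dots> = (\<Sum>r<length w. of_int (snd (w ! r)) * (\<Sum>j=1..n-1. (if m_turns w r = j then 1 else 0) * x ^ j))"
      by (subst sum.swap) (simp add: sum_distrib_left)
    also have "\<dots> = (\<Sum>r<length w. of_int (snd (w ! r)) * x ^ m_turns w r)"
    proof (intro sum.cong refl arg_cong2[where f="(*)"])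
      fix r assume "r \<in> {..<length w}"
      then have m: "m_turns w r \<in> {1..n-1}" using mt by force
      show "(\<Sum>j=1..n-1. (if m_turns w r = j then 1 else 0) * x ^ j) = x ^ m_turns w r"
        using sum_delta_pow[OF m] by simp
    qed
    finally have L: "(\<Sum>j=1..n-1. of_int (f j) * x ^ j) = (\<Sum>r<length w. of_int (snd (w ! r)) * x ^ m_turns w r)" .
    have "fiedler n w (sqrt x) = (\<Sum>r<length w. of_int (snd (w ! r)) * (x ^ m_turns w r * x powr (- real n / 2)))"
      unfolding fiedler_def using sqrt_powi[OF x] by simp
    also have "\<dots> = (\<Sum>j=1..n-1. of_int (f j) * x ^ j) * x powr (- real n / 2)"
      unfolding L sum_distrib_right by (intro sum.cong refl) (simp add: algebra_simps)
    finally show "fiedler n w (sqrt x) = (\<Sum>j=1..n-1. of_int (f j) * x ^ j) * x powr (- real n / 2)" .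
  qed
qed


end
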